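(* Assume $\gamma'\le0$ on $\mathbb R$. Let $(\psi,\eta,\alpha)$ solve (W1)–(W8) and let $v$ be the conformal vertical velocity. If $v\le0$ on $\Gamma^+$, then either $v<0$ in $\Gamma^+\cup\mathcal R^+$, or $v\equiv0$.
   Context: Standing setup: $\mathcal R=\{(x,y):0<y<1\}$, $\Gamma=\{y=1\}$, $B=\{y=0\}$, $\mathcal R^+=\mathcal R\cap\{x>0\}$, $\Gamma^+=\Gamma\cap\{x>0\}$, $\beta\in(0,1)$. $\gamma\in C^{2,1}_{\rm loc}(\mathbb R)$; $\psi_{\rm triv}''=-\gamma(\psi_{\rm triv})$ on $[0,1]$, $\psi_{\rm triv}(0)=0$, $\psi_{\rm triv}(1)=1$, $\psi_{\rm triv}'>0$ on $[0,1]$; $\mu=\psi_{\rm triv}'(1)^2$. Given $\alpha\in\mathbb R$, the problem for $(\psi,\eta)$ is: (W1) $\Delta\psi=-\gamma(\psi)|\nabla\eta|^2$ in $\mathcal R$; (W2) $\psi=1$ on $\Gamma$, $\psi=0$ on $B$; (W3) $\psi_y^2=(\mu-2\alpha(\eta-1))|\nabla\eta|^2$ on $\Gamma$; (W4) $\Delta\eta=0$ in $\mathcal R$, $\eta=0$ on $B$; (W5) $\psi(x,y)\to\psi_{\rm triv}(y)$, $\eta(x,y)\to y$ as $x\to\pm\infty$ uniformly in $y$; (W6) $\psi,\eta\in C^{3+\beta}_b(\overline{\mathcal R})$; (W7) $\psi,\eta$ even in $x$; (W8) $\inf_{\mathcal R}(\mu-2\alpha(\eta-1))|\nabla\eta|^2>0$.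 Velocity in conformal variables: $u=\dfrac{\psi_x\eta_x+\psi_y\eta_y}{\eta_x^2+\eta_y^2}$, $v=\dfrac{\psi_y\eta_x-\psi_x\eta_y}{\eta_x^2+\eta_y^2}$. *)

theory Defs
  imports "HOL-Analysis.Analysis"
begin

definition strip :: "(real \<times> real) set" where
  "strip = {p. 0 < snd p \<and> snd p < 1}"

definition cstrip :: "(real \<times> real) set" where
  "cstrip = {p. 0 \<le> snd p \<and> snd p \<le> 1}"

definition Gamma_plus :: "(real \<times> real) set" where
  "Gamma_plus = {p. snd p = 1 \<and> 0 < fst p}"

definition R_plus :: "(real \<times> real) set" where
  "R_plus = {p. 0 < snd p \<and> snd p < 1 \<and> 0 < fst p}"

text \<open>Partial derivatives on the closed strip (one-sided in y on the boundary lines).\<close>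

definition Dx :: "(real \<times> real \<Rightarrow> real) \<Rightarrow> real \<times> real \<Rightarrow> real" where
  "Dx f p = vector_derivative (\<lambda>t. f (t, snd p)) (at (fst p))"

definition Dy :: "(real \<times> real \<Rightarrow> real) \<Rightarrow> real \<times> real \<Rightarrow> real" where
  "Dy f p = vector_derivative (\<lambda>t. f (fst p, t)) (at (snd p) within {0..1})"

definition has_Dx :: "(real \<times> real \<Rightarrow> real) \<Rightarrow> real \<times> real \<Rightarrow> bool" where
  "has_Dx f p \<longleftrightarrow> (\<lambda>t. f (t, snd p)) differentiable (at (fst p))"

definition has_Dy :: "(real \<times> real \<Rightarrow> real) \<Rightarrow> real \<times> real \<Rightarrow> bool" where
  "has_Dy f p \<longleftrightarrow> (\<lambda>t. f (fst p, t)) differentiable (at (snd p) within {0..1})"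

text \<open>Iterated partial derivative: True = d/dx, False = d/dy; the last list entry is applied first.\<close>

fun pd :: "bool list \<Rightarrow> (real \<times> real \<Rightarrow> real) \<Rightarrow> real \<times> real \<Rightarrow> real" where
  "pd [] f = f"
| "pd (d # ds) f = (if d then Dx (pd ds f) else Dy (pd ds f))"

definition holder_Ckb :: "nat \<Rightarrow> real \<Rightarrow> (real \<times> real \<Rightarrow> real) \<Rightarrow> bool" where
  "holder_Ckb k \<beta> f \<longleftrightarrow>
     (\<forall>ds. length ds < k \<longrightarrow> (\<forall>p\<in>cstrip. has_Dx (pd ds f) p \<and> has_Dy (pd ds f) p)) \<and>
     (\<forall>ds. length ds \<le> k \<longrightarrow> continuous_on cstrip (pd ds f) \<and>
                              bounded (pd ds f ` cstrip)) \<and>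
     (\<forall>ds. length ds = k \<longrightarrow> (\<exists>C. \<forall>p\<in>cstrip. \<forall>q\<in>cstrip.
                   \<bar>pd ds f p - pd ds f q\<bar> \<le> C * dist p q powr \<beta>))"

definition C21_loc :: "(real \<Rightarrow> real) \<Rightarrow> bool" where
  "C21_loc g \<longleftrightarrow> (\<forall>x. g differentiable (at x)) \<and> (\<forall>x. deriv g differentiable (at x)) \<and>
     (\<forall>a b. \<exists>L. \<forall>x\<in>{a..b}. \<forall>y\<in>{a..b}.
        \<bar>deriv (deriv g) x - deriv (deriv g) y\<bar> \<le> L * \<bar>x - y\<bar>)"

definition triv_profile :: "(real \<Rightarrow> real) \<Rightarrow> (real \<Rightarrow> real) \<Rightarrow> (real \<Rightarrow> real) \<Rightarrow> bool" where
  "triv_profile g pt dpt \<longleftrightarrow>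
     (\<forall>y\<in>{0..1}. (pt has_real_derivative dpt y) (at y within {0..1}) \<and>
                  (dpt has_real_derivative (- g (pt y))) (at y within {0..1}) \<and>
                  dpt y > 0) \<and> pt 0 = 0 \<and> pt 1 = 1"

definition gradsq :: "(real \<times> real \<Rightarrow> real) \<Rightarrow> real \<times> real \<Rightarrow> real" where
  "gradsq f p = (Dx f p)\<^sup>2 + (Dy f p)\<^sup>2"

definition lap :: "(real \<times> real \<Rightarrow> real) \<Rightarrow> real \<times> real \<Rightarrow> real" where
  "lap f p = Dx (Dx f) p + Dy (Dy f) p"

text \<open>The problem (W1)--(W8) for (psi, eta) with parameter alpha, mu = psi_triv'(1)^2.\<close>

definition solves_W :: "(real \<Rightarrow> real) \<Rightarrow> real \<Rightarrow> (real \<Rightarrow> real) \<Rightarrow> real \<Rightarrow> real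
     \<Rightarrow> (real \<times> real \<Rightarrow> real) \<Rightarrow> (real \<times> real \<Rightarrow> real) \<Rightarrow> bool" where
  "solves_W g \<beta> pt \<mu> \<alpha> \<psi> \<eta> \<longleftrightarrow>
     (\<forall>p\<in>strip. lap \<psi> p = - g (\<psi> p) * gradsq \<eta> p) \<and>
     (\<forall>x. \<psi> (x, 1) = 1 \<and> \<psi> (x, 0) = 0) \<and>
     (\<forall>x. (Dy \<psi> (x, 1))\<^sup>2 = (\<mu> - 2 * \<alpha> * (\<eta> (x, 1) - 1)) * gradsq \<eta> (x, 1)) \<and>
     (\<forall>p\<in>strip. lap \<eta> p = 0) \<and> (\<forall>x. \<eta> (x, 0) = 0) \<and>
     (\<forall>\<epsilon>>0. \<exists>M. \<forall>x y. M \<le> \<bar>x\<bar> \<and> 0 \<le> y \<and> y \<le> 1 \<longrightarrow>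
          \<bar>\<psi> (x, y) - pt y\<bar> < \<epsilon> \<and> \<bar>\<eta> (x, y) - y\<bar> < \<epsilon>) \<and>
     holder_Ckb 3 \<beta> \<psi> \<and> holder_Ckb 3 \<beta> \<eta> \<and>
     (\<forall>x y. 0 \<le> y \<and> y \<le> 1 \<longrightarrow> \<psi> (-x, y) = \<psi> (x, y) \<and> \<eta> (-x, y) = \<eta> (x, y)) \<and>
     (\<exists>c>0. \<forall>p\<in>strip. (\<mu> - 2 * \<alpha> * (\<eta> p - 1)) * gradsq \<eta> p \<ge> c)"

definition vvel :: "(real \<times> real \<Rightarrow> real) \<Rightarrow> (real \<times> real \<Rightarrow> real) \<Rightarrow> real \<times> real \<Rightarrow> real" where
  "vvel \<psi> \<eta> p = (Dy \<psi> p * Dx \<eta> p - Dx \<psi> p * Dy \<eta> p) / gradsq \<eta> p"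

end

theory Submission
  imports Defs
begin
lemma hasDx_D: "has_Dx f p \<Longrightarrow> ((\<lambda>t. f (t, snd p)) has_real_derivative Dx f p) (at (fst p))"
  unfolding has_Dx_def Dx_def
  by (simp add: vector_derivative_works has_real_derivative_iff_has_vector_derivative)

lemma Dx_eqI: "((\<lambda>t. f (t, snd p)) has_real_derivative d) (at (fst p)) \<Longrightarrow> Dx f p = d"
  unfolding Dx_def by (simp add: has_real_derivative_iff_has_vector_derivative vector_derivative_at)

lemma has_DxI: "((\<lambda>t. f (t, snd p)) has_real_derivative d) (at (fst p)) \<Longrightarrow> has_Dx f p"
  unfolding has_Dx_def using real_differentiable_def by blast

lemma hasDy_D: "has_Dy f p \<Longrightarrow> ((\<lambda>t. f (fst p, t)) has_real_derivative Dy f p) (at (snd p) within {0..1})"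
  unfolding has_Dy_def Dy_def
  by (simp add: vector_derivative_works has_real_derivative_iff_has_vector_derivative)

lemma Dy_eqI: "((\<lambda>t. f (fst p, t)) has_real_derivative d) (at (snd p) within {0..1}) \<Longrightarrow> snd p \<in> {0..1}
   \<Longrightarrow> Dy f p = d"
  unfolding Dy_def
  by (rule vector_derivative_within_closed_interval) (auto simp: has_real_derivative_iff_has_vector_derivative)

lemma has_DyI: "((\<lambda>t. f (fst p, t)) has_real_derivative d) (at (snd p) within {0..1}) \<Longrightarrow> has_Dy f p"
  unfolding has_Dy_def using real_differentiable_def by blast

lemma cstrip_iff: "p \<in> cstrip \<longleftrightarrow> snd p \<in> {0..1}" by (auto simp: cstrip_def)
lemma strip_iff: "p \<in> strip \<longleftrightarrow> snd p \<in> {0<..<1}" by (auto simp: strip_def)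

lemma Dx_cong: "(\<And>t. f (t, snd p) = g (t, snd p)) \<Longrightarrow> Dx f p = Dx g p \<and> (has_Dx f p \<longleftrightarrow> has_Dx g p)"
  unfolding Dx_def has_Dx_def by simp

lemma Dy_cong: assumes "\<And>t. t \<in> {0..1} \<Longrightarrow> f (fst p, t) = g (fst p, t)" "snd p \<in> {0..1}"
  shows "Dy f p = Dy g p \<and> (has_Dy f p \<longleftrightarrow> has_Dy g p)"
proof
  show "Dy f p = Dy g p" unfolding Dy_def
    by (rule vector_derivative_cong_eq) (use assms in auto)
  have "\<And>D. ((\<lambda>t. f (fst p, t)) has_real_derivative D) (at (snd p) within {0..1}) =
      ((\<lambda>t. g (fst p, t)) has_real_derivative D) (at (snd p) within {0..1})"
    by (rule has_field_derivative_cong_ev) (use assms in \<open>auto simp: eventually_at_filter\<close>)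
  then show "has_Dy f p \<longleftrightarrow> has_Dy g p" unfolding has_Dy_def real_differentiable_def by simp
qed

lemma Dy_cong_open: assumes "\<And>t. t \<in> {0<..<1} \<Longrightarrow> f (fst p, t) = g (fst p, t)" "snd p \<in> {0<..<1}"
  shows "Dy f p = Dy g p \<and> (has_Dy f p \<longleftrightarrow> has_Dy g p)"
proof
  have ev: "\<forall>\<^sub>F x in nhds (snd p). x \<in> {0..1} \<longrightarrow> f (fst p, x) = g (fst p, x)"
    unfolding eventually_nhds using assms by (intro exI[of _ "{0<..<1}"]) auto
  show "Dy f p = Dy g p" unfolding Dy_def
    by (rule vector_derivative_cong_eq) (use assms ev in auto)
  have "\<And>D. ((\<lambda>t. f (fst p, t)) has_real_derivative D) (at (snd p) within {0..1}) =
      ((\<lambda>t. g (fst p, t)) has_real_derivative D) (at (snd p) within {0..1})"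
    by (rule has_field_derivative_cong_ev) (use assms ev in auto)
  then show "has_Dy f p \<longleftrightarrow> has_Dy g p" unfolding has_Dy_def real_differentiable_def by simp
qed

lemma at_y: "p \<in> strip \<Longrightarrow> at (snd p) within {0..1} = at (snd p)"
  by (rule at_within_Icc_at) (auto simp: strip_def)

fun sm :: "nat \<Rightarrow> (real \<times> real \<Rightarrow> real) \<Rightarrow> bool" where
  "sm 0 f = continuous_on cstrip f"
| "sm (Suc k) f = (continuous_on cstrip f \<and> (\<forall>p\<in>cstrip. has_Dx f p \<and> has_Dy f p) \<and> sm k (Dx f) \<and> sm k (Dy f))"

lemma sm_cont: "sm k f \<Longrightarrow> continuous_on cstrip f" by (cases k) auto

lemma sm_cong: "sm k f \<Longrightarrow> (\<And>p. p \<in> cstrip \<Longrightarrow> f p = g p) \<Longrightarrow> sm k g"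
proof (induction k arbitrary: f g)
  case 0 then show ?case using continuous_on_cong by auto
next
  case (Suc k)
  have eq: "p \<in> cstrip \<Longrightarrow> Dx f p = Dx g p \<and> (has_Dx f p \<longleftrightarrow> has_Dx g p) \<and>
     Dy f p = Dy g p \<and> (has_Dy f p \<longleftrightarrow> has_Dy g p)" for p
    using Dx_cong[of f p g] Dy_cong[of f p g] Suc.prems(2) by (auto simp: cstrip_def)
  have sx: "sm k (Dx g)" using Suc.IH[of "Dx f" "Dx g"] Suc.prems eq by simp
  have sy: "sm k (Dy g)" using Suc.IH[of "Dy f" "Dy g"] Suc.prems eq by simp
  have cont: "continuous_on cstrip g" using Suc.prems continuous_on_cong[of cstrip cstrip f g] by simp
  have hs: "\<forall>p\<in>cstrip. has_Dx g p \<and> has_Dy g p" using eq Suc.prems by simp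
  show ?case unfolding sm.simps using cont hs sx sy by blast
qed

lemma sm_mono: "sm (Suc k) f \<Longrightarrow> sm k f"
proof (induction k arbitrary: f)
  case 0 then show ?case by simp
next
  case (Suc k)
  note P = Suc.prems[unfolded sm.simps(2)[of "Suc k"]]
  have "sm k (Dx f)" "sm k (Dy f)" using Suc.IH P by blast+
  then show ?case using P unfolding sm.simps(2)[of k] by blast
qed

lemma sm_mono_le: "sm k f \<Longrightarrow> j \<le> k \<Longrightarrow> sm j f"
proof (induction k)
  case 0 thus ?case by simp
next
  case (Suc k) thus ?case using sm_mono[of k f] by (cases "j = Suc k") auto
qed

lemma sm_const: "sm k (\<lambda>p. c)"
proof (induction k arbitrary: c)
  case 0 then show ?case by simp
next
  case (Suc k)
  have "p \<in> cstrip \<Longrightarrow> Dx (\<lambda>p. c) p = 0 \<and> has_Dx (\<lambda>p. c) p \<and> Dy (\<lambda>p. c) p = 0 \<and> has_Dy (\<lambda>p. c) p" for p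
    using Dx_eqI[of "\<lambda>p. c" p 0] has_DxI[of "\<lambda>p. c" p 0] Dy_eqI[of "\<lambda>p. c" p 0] has_DyI[of "\<lambda>p. c" p 0]
    by (auto simp: cstrip_def)
  then show ?case using Suc sm_cong[of k "\<lambda>p. 0" "Dx (\<lambda>p. c)"] sm_cong[of k "\<lambda>p. 0" "Dy (\<lambda>p. c)"] by auto
qed

lemma sm_add: "sm k f \<Longrightarrow> sm k g \<Longrightarrow> sm k (\<lambda>p. f p + g p)"
proof (induction k arbitrary: f g)
  case 0 then show ?case by (auto intro: continuous_on_add)
next
  case (Suc k)
  have "p \<in> cstrip \<Longrightarrow> Dx (\<lambda>p. f p + g p) p = Dx f p + Dx g p \<and> has_Dx (\<lambda>p. f p + g p) p
     \<and> Dy (\<lambda>p. f p + g p) p = Dy f p + Dy g p \<and> has_Dy (\<lambda>p. f p + g p) p" for p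
  proof -
    assume p: "p \<in> cstrip"
    have x: "((\<lambda>t. f (t, snd p) + g (t, snd p)) has_real_derivative Dx f p + Dx g p) (at (fst p))"
      using Suc.prems p by (intro derivative_intros hasDx_D) auto
    have y: "((\<lambda>t. f (fst p, t) + g (fst p, t)) has_real_derivative Dy f p + Dy g p) (at (snd p) within {0..1})"
      using Suc.prems p by (intro derivative_intros hasDy_D) auto
    show ?thesis using Dx_eqI[OF x] has_DxI[OF x] Dy_eqI[OF y] has_DyI[OF y] p by (auto simp: cstrip_def)
  qed
  note D = this
  have sx: "sm k (Dx (\<lambda>p. f p + g p))"
    by (rule sm_cong[OF Suc.IH[of "Dx f" "Dx g"]]) (use D Suc.prems in auto)
  have sy: "sm k (Dy (\<lambda>p. f p + g p))"
    by (rule sm_cong[OF Suc.IH[of "Dy f" "Dy g"]]) (use D Suc.prems in auto)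
  have cont: "continuous_on cstrip (\<lambda>p. f p + g p)"
    using sm_cont[OF Suc.prems(1)] sm_cont[OF Suc.prems(2)] by (rule continuous_on_add)
  have hs: "\<forall>p\<in>cstrip. has_Dx (\<lambda>p. f p + g p) p \<and> has_Dy (\<lambda>p. f p + g p) p" using D by blast
  show ?case unfolding sm.simps using cont hs sx sy by blast
qed

lemma sm_mult: "sm k f \<Longrightarrow> sm k g \<Longrightarrow> sm k (\<lambda>p. f p * g p)"
proof (induction k arbitrary: f g)
  case 0 then show ?case by (auto intro: continuous_on_mult)
next
  case (Suc k)
  have "p \<in> cstrip \<Longrightarrow> Dx (\<lambda>p. f p * g p) p = Dx f p * g p + f p * Dx g p \<and> has_Dx (\<lambda>p. f p * g p) p
     \<and> Dy (\<lambda>p. f p * g p) p = Dy f p * g p + f p * Dy g p \<and> has_Dy (\<lambda>p. f p * g p) p" for p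
  proof -
    assume p: "p \<in> cstrip"
    have x: "((\<lambda>t. f (t, snd p) * g (t, snd p)) has_real_derivative Dx f p * g p + f p * Dx g p) (at (fst p))"
      using Suc.prems p by (auto intro!: derivative_eq_intros hasDx_D)
    have y: "((\<lambda>t. f (fst p, t) * g (fst p, t)) has_real_derivative Dy f p * g p + f p * Dy g p) (at (snd p) within {0..1})"
      using Suc.prems p by (auto intro!: derivative_eq_intros hasDy_D)
    show ?thesis using Dx_eqI[OF x] has_DxI[OF x] Dy_eqI[OF y] has_DyI[OF y] p by (auto simp: cstrip_def)
  qed
  note D = this
  have f1: "sm k f" "sm k g" using Suc.prems by (auto intro: sm_mono)
  have c1: "sm k (\<lambda>p. Dx f p * g p + f p * Dx g p)"
    using Suc.prems f1 by (intro sm_add Suc.IH) auto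
  have c2: "sm k (\<lambda>p. Dy f p * g p + f p * Dy g p)"
    using Suc.prems f1 by (intro sm_add Suc.IH) auto
  have sx: "sm k (Dx (\<lambda>p. f p * g p))"
    by (rule sm_cong[OF c1]) (use D in auto)
  have sy: "sm k (Dy (\<lambda>p. f p * g p))"
    by (rule sm_cong[OF c2]) (use D in auto)
  have cont: "continuous_on cstrip (\<lambda>p. f p * g p)"
    using sm_cont[OF Suc.prems(1)] sm_cont[OF Suc.prems(2)] by (rule continuous_on_mult)
  have hs: "\<forall>p\<in>cstrip. has_Dx (\<lambda>p. f p * g p) p \<and> has_Dy (\<lambda>p. f p * g p) p" using D by blast
  show ?case unfolding sm.simps using cont hs sx sy by blast
qed

lemma sm_neg: "sm k f \<Longrightarrow> sm k (\<lambda>p. - f p)"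
  using sm_mult[OF sm_const[of k "-1"], of f] by simp

lemma sm_diff: "sm k f \<Longrightarrow> sm k g \<Longrightarrow> sm k (\<lambda>p. f p - g p)"
proof -
  assume a: "sm k f" "sm k g"
  have "sm k (\<lambda>p. f p + - g p)" by (intro sm_add sm_neg a)
  then show ?thesis by simp
qed

lemma sm_inv: "sm k f \<Longrightarrow> (\<And>p. p \<in> cstrip \<Longrightarrow> f p \<noteq> 0) \<Longrightarrow> sm k (\<lambda>p. 1 / f p)"
proof (induction k arbitrary: f)
  case 0 then show ?case by (auto intro!: continuous_on_divide continuous_on_const)
next
  case (Suc k)
  have D: "p \<in> cstrip \<Longrightarrow> Dx (\<lambda>p. 1 / f p) p = - Dx f p * (1 / f p) * (1 / f p) \<and> has_Dx (\<lambda>p. 1 / f p) p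
     \<and> Dy (\<lambda>p. 1 / f p) p = - Dy f p * (1 / f p) * (1 / f p) \<and> has_Dy (\<lambda>p. 1 / f p) p" for p
  proof -
    assume p: "p \<in> cstrip"
    have fp: "f (fst p, snd p) \<noteq> 0" using Suc.prems(2) p by simp
    have x: "((\<lambda>t. 1 / f (t, snd p)) has_real_derivative - Dx f p * (1 / f p) * (1 / f p)) (at (fst p))"
      using Suc.prems(1) p fp by (auto intro!: derivative_eq_intros hasDx_D simp: field_simps power2_eq_square)
    have y: "((\<lambda>t. 1 / f (fst p, t)) has_real_derivative - Dy f p * (1 / f p) * (1 / f p)) (at (snd p) within {0..1})"
      using Suc.prems(1) p fp by (auto intro!: derivative_eq_intros hasDy_D simp: field_simps power2_eq_square)
    show ?thesis using Dx_eqI[OF x] has_DxI[OF x] Dy_eqI[OF y] has_DyI[OF y] p by (simp add: cstrip_def)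
  qed
  have A: "sm k (\<lambda>p. 1 / f p)" using Suc.IH[of f] sm_mono[OF Suc.prems(1)] Suc.prems(2) by blast
  have B: "sm k (Dx f)" "sm k (Dy f)" using Suc.prems(1) by auto
  have C1: "sm k (\<lambda>p. - Dx f p * (1 / f p) * (1 / f p))"
    by (rule sm_mult[OF sm_mult[OF sm_neg[OF B(1)] A] A])
  have C2: "sm k (\<lambda>p. - Dy f p * (1 / f p) * (1 / f p))"
    by (rule sm_mult[OF sm_mult[OF sm_neg[OF B(2)] A] A])
  have sx: "sm k (Dx (\<lambda>p. 1 / f p))" by (rule sm_cong[OF C1]) (use D in simp)
  have sy: "sm k (Dy (\<lambda>p. 1 / f p))" by (rule sm_cong[OF C2]) (use D in simp)
  have nz: "\<forall>p\<in>cstrip. f p \<noteq> 0" using Suc.prems(2) by blast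
  have cont: "continuous_on cstrip (\<lambda>p. 1 / f p)"
    using nz sm_cont[OF Suc.prems(1)] by (auto intro!: continuous_on_divide continuous_on_const)
  have hs: "\<forall>p\<in>cstrip. has_Dx (\<lambda>p. 1 / f p) p \<and> has_Dy (\<lambda>p. 1 / f p) p" using D by blast
  show ?case unfolding sm.simps using cont hs sx sy by blast
qed

lemma sm_div: "sm k f \<Longrightarrow> sm k g \<Longrightarrow> (\<And>p. p \<in> cstrip \<Longrightarrow> g p \<noteq> 0) \<Longrightarrow> sm k (\<lambda>p. f p / g p)"
  using sm_mult[OF _ sm_inv, of k f g] by simp

lemma pd_snoc: "pd ds (Dx f) = pd (ds @ [True]) f" "pd ds (Dy f) = pd (ds @ [False]) f"
  by (induction ds) auto

lemma sm_of_holder: "(\<forall>ds. length ds < k \<longrightarrow> (\<forall>p\<in>cstrip. has_Dx (pd ds f) p \<and> has_Dy (pd ds f) p)) \<Longrightarrow>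
    (\<forall>ds. length ds \<le> k \<longrightarrow> continuous_on cstrip (pd ds f)) \<Longrightarrow> sm k f"
proof (induction k arbitrary: f)
  case 0 then show ?case by (auto dest: spec[of _ "[]"])
next
  case (Suc k)
  have a: "sm k (Dx f)"
    by (rule Suc.IH) (use Suc.prems in \<open>auto simp: pd_snoc\<close>)
  have b: "sm k (Dy f)"
    by (rule Suc.IH) (use Suc.prems in \<open>auto simp: pd_snoc\<close>)
  show ?case using a b Suc.prems(1)[rule_format, of "[]"] Suc.prems(2)[rule_format, of "[]"] by auto
qed

lemma holder_sm: "holder_Ckb k b f \<Longrightarrow> sm k f"
proof -
  assume h: "holder_Ckb k b f"
  have 1: "\<forall>ds. length ds < k \<longrightarrow> (\<forall>p\<in>cstrip. has_Dx (pd ds f) p \<and> has_Dy (pd ds f) p)"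
    using h unfolding holder_Ckb_def by blast
  have 2: "\<forall>ds. length ds \<le> k \<longrightarrow> continuous_on cstrip (pd ds f)"
    using h unfolding holder_Ckb_def by blast
  show ?thesis using sm_of_holder[OF 1 2] .
qed

lemma hasDy_at: "has_Dy f p \<Longrightarrow> p \<in> strip \<Longrightarrow> ((\<lambda>t. f (fst p, t)) has_real_derivative Dy f p) (at (snd p))"
  using hasDy_D[of f p] at_y[of p] by simp

lemma hx_at: "has_Dx f (a, b) \<Longrightarrow> ((\<lambda>t. f (t, b)) has_real_derivative Dx f (a, b)) (at a)"
  using hasDx_D[of f "(a, b)"] by simp

lemma hy_at: "has_Dy f (a, b) \<Longrightarrow> (a, b) \<in> strip \<Longrightarrow> ((\<lambda>t. f (a, t)) has_real_derivative Dy f (a, b)) (at b)"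
  using hasDy_at[of f "(a, b)"] by simp

lemma sm2_parts: assumes "sm 2 f"
  shows "\<forall>p\<in>cstrip. has_Dx f p \<and> has_Dy f p" "\<forall>p\<in>cstrip. has_Dy (Dx f) p" "\<forall>p\<in>cstrip. has_Dx (Dy f) p"
    "continuous_on cstrip (Dy (Dx f))" "continuous_on cstrip (Dx (Dy f))"
proof -
  note a = assms[unfolded numeral_2_eq_2 sm.simps(2)]
  note b = a[unfolded One_nat_def sm.simps(2)]
  show "\<forall>p\<in>cstrip. has_Dx f p \<and> has_Dy f p" "\<forall>p\<in>cstrip. has_Dy (Dx f) p" "\<forall>p\<in>cstrip. has_Dx (Dy f) p"
    using b by blast+
  show "continuous_on cstrip (Dy (Dx f))" "continuous_on cstrip (Dx (Dy f))"
    using b[unfolded sm.simps(1)] by blast+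
qed

lemma schwarz: assumes f: "sm 2 f" and z: "z \<in> strip"
  shows "Dy (Dx f) z = Dx (Dy f) z"
proof (rule ccontr)
  assume ne: "Dy (Dx f) z \<noteq> Dx (Dy f) z"
  define A where "A = Dy (Dx f)"
  define B where "B = Dx (Dy f)"
  obtain x y where zxy: "z = (x, y)" by fastforce
  have y01: "0 < y" "y < 1" using z zxy by (auto simp: strip_def)
  define e where "e = \<bar>A z - B z\<bar> / 2"
  have e: "e > 0" using ne by (simp add: e_def A_def B_def)
  note P = sm2_parts[OF f]
  have zc: "z \<in> cstrip" using z by (auto simp: strip_def cstrip_def)
  obtain dA where dA: "dA > 0" "\<And>w. w \<in> cstrip \<Longrightarrow> dist w z < dA \<Longrightarrow> dist (A w) (A z) < e"
    using P(4) zc e unfolding continuous_on_iff A_def by metis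
  obtain dB where dB: "dB > 0" "\<And>w. w \<in> cstrip \<Longrightarrow> dist w z < dB \<Longrightarrow> dist (B w) (B z) < e"
    using P(5) zc e unfolding continuous_on_iff B_def by metis
  define t where "t = min (min dA dB / 2) ((1 - y) / 2)"
  have t1: "t \<le> (1 - y) / 2" "t \<le> min dA dB / 2" unfolding t_def by linarith+
  have t: "t > 0" "t < dA" "t < dB" "y + t < 1" using dA dB y01 t1 by (auto simp: t_def)
  have near: "dist (a, b) z < min dA dB" if "x \<le> a" "a \<le> x + t" "y \<le> b" "b \<le> y + t" for a b
  proof -
    have "dist (a, b) z = sqrt ((a - x)^2 + (b - y)^2)" by (simp add: zxy dist_Pair_Pair dist_real_def)
    also have "\<dots> \<le> sqrt (t^2 + t^2)" using that t by (intro real_sqrt_le_mono add_mono power_mono) auto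
    also have "\<dots> = sqrt 2 * t" using t by (simp add: real_sqrt_mult)
    also have "\<dots> < 2 * t" using t by (intro mult_strict_right_mono) (auto simp: real_less_lsqrt)
    also have "\<dots> \<le> min dA dB" using t1 by linarith
    finally show ?thesis .
  qed
  have inS: "(a, b) \<in> strip" if "y \<le> b" "b \<le> y + t" for a b using that y01 t by (auto simp: strip_def)
  have inC: "(a, b) \<in> cstrip" if "y \<le> b" "b \<le> y + t" for a b using inS[OF that] by (auto simp: strip_def cstrip_def)
  define Del where "Del = f (x + t, y + t) - f (x + t, y) - f (x, y + t) + f (x, y)"
  obtain \<xi> where xi: "x < \<xi>" "\<xi> < x + t" "(f (x + t, y + t) - f (x + t, y)) - (f (x, y + t) - f (x, y))
      = t * (Dx f (\<xi>, y + t) - Dx f (\<xi>, y))"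
  proof -
    have "\<And>s. x \<le> s \<Longrightarrow> s \<le> x + t \<Longrightarrow> ((\<lambda>s. f (s, y + t) - f (s, y)) has_real_derivative
        (Dx f (s, y + t) - Dx f (s, y))) (at s)"
      using P(1) inC t
      by (intro derivative_intros hx_at) auto
    from MVT2[of x "x + t", OF _ this] t show ?thesis using that by auto
  qed
  obtain \<zeta> where zeta: "y < \<zeta>" "\<zeta> < y + t" "Dx f (\<xi>, y + t) - Dx f (\<xi>, y) = t * A (\<xi>, \<zeta>)"
  proof -
    have "\<And>r. y \<le> r \<Longrightarrow> r \<le> y + t \<Longrightarrow> ((\<lambda>r. Dx f (\<xi>, r)) has_real_derivative A (\<xi>, r)) (at r)"
      unfolding A_def using P(2) inS inC by (intro hy_at) auto
    from MVT2[of y "y + t", OF _ this] t show ?thesis using that by auto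
  qed
  obtain \<zeta>' where zeta': "y < \<zeta>'" "\<zeta>' < y + t" "(f (x + t, y + t) - f (x, y + t)) - (f (x + t, y) - f (x, y))
      = t * (Dy f (x + t, \<zeta>') - Dy f (x, \<zeta>'))"
  proof -
    have "\<And>r. y \<le> r \<Longrightarrow> r \<le> y + t \<Longrightarrow> ((\<lambda>r. f (x + t, r) - f (x, r)) has_real_derivative
        (Dy f (x + t, r) - Dy f (x, r))) (at r)"
      using P(1) inS inC
      by (intro derivative_intros hy_at) auto
    from MVT2[of y "y + t", OF _ this] t show ?thesis using that by auto
  qed
  obtain \<xi>' where xi': "x < \<xi>'" "\<xi>' < x + t" "Dy f (x + t, \<zeta>') - Dy f (x, \<zeta>') = t * B (\<xi>', \<zeta>')"
  proof -
    have "\<And>s. x \<le> s \<Longrightarrow> s \<le> x + t \<Longrightarrow> ((\<lambda>s. Dy f (s, \<zeta>')) has_real_derivative B (s, \<zeta>')) (at s)"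
      unfolding B_def using P(3) inC zeta' by (intro hx_at) auto
    from MVT2[of x "x + t", OF _ this] t show ?thesis using that by auto
  qed
  have "t * (t * A (\<xi>, \<zeta>)) = t * (t * B (\<xi>', \<zeta>'))"
    using xi(3) zeta(3) zeta'(3) xi'(3) by (simp add: algebra_simps)
  then have AB: "A (\<xi>, \<zeta>) = B (\<xi>', \<zeta>')" using t by simp
  have "dist (A (\<xi>, \<zeta>)) (A z) < e"
    using xi zeta by (auto intro!: dA(2) inC less_le_trans[OF near])
  moreover have "dist (B (\<xi>', \<zeta>')) (B z) < e"
    using xi' zeta' by (auto intro!: dB(2) inC less_le_trans[OF near])
  ultimately have "\<bar>A z - B z\<bar> < 2 * e" using AB by (simp add: dist_real_def)
  then show False by (simp add: e_def)
qed

lemma max2: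
  fixes f f' :: "real \<Rightarrow> real"
  assumes r: "r > 0"
    and d1: "\<And>t. x0 - r < t \<Longrightarrow> t < x0 + r \<Longrightarrow> (f has_real_derivative f' t) (at t)"
    and d2: "(f' has_real_derivative f2) (at x0)"
    and mx: "\<And>t. x0 - r < t \<Longrightarrow> t < x0 + r \<Longrightarrow> f t \<le> f x0"
  shows "f2 \<le> 0"
proof (rule ccontr)
  assume "\<not> f2 \<le> 0"
  then have f2: "f2 > 0" by simp
  have f'0: "f' x0 = 0"
    by (rule DERIV_local_max[OF d1[of x0] r]) (use r mx in \<open>auto simp: abs_less_iff\<close>)
  have "((\<lambda>y. (f' y - f' x0) / (y - x0)) \<longlongrightarrow> f2) (at x0)"
    using d2 by (simp add: has_field_derivative_iff)
  from order_tendstoD(1)[OF this, of 0] f2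
  have "\<forall>\<^sub>F y in at x0. 0 < (f' y - f' x0) / (y - x0)" by simp
  then obtain d where d: "d > 0" "\<And>y. y \<noteq> x0 \<Longrightarrow> dist y x0 < d \<Longrightarrow> 0 < f' y / (y - x0)"
    unfolding eventually_at using f'0 by auto
  define t1 where "t1 = x0 + min d r / 2"
  have t1: "x0 < t1" "t1 < x0 + r" "t1 - x0 < d" using d r by (auto simp: t1_def)
  have "\<And>s. x0 \<le> s \<Longrightarrow> s \<le> t1 \<Longrightarrow> (f has_real_derivative f' s) (at s)"
    using t1 r by (intro d1) auto
  from MVT2[OF t1(1) this] obtain s where s: "x0 < s" "s < t1" "f t1 - f x0 = (t1 - x0) * f' s" by blast
  have "0 < f' s / (s - x0)" using d(2)[of s] s t1 by (auto simp: dist_real_def)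
  then have "f' s > 0" using s by (simp add: zero_less_divide_iff)
  then have "f t1 - f x0 > 0" using s t1 by simp
  moreover have "f t1 \<le> f x0" using mx[of t1] t1 r by auto
  ultimately show False by simp
qed

lemma hopf_1d:
  fixes f :: "real \<Rightarrow> real"
  assumes der: "(f has_real_derivative 0) (at t0 within S)" and f0: "f t0 = 0"
    and n: "n \<noteq> 0" and k: "\<kappa> > 0" and dl: "\<delta> > 0"
    and bnd: "\<And>t. 0 < \<bar>t\<bar> \<Longrightarrow> \<bar>t\<bar> < \<delta> \<Longrightarrow> t * n < 0 \<Longrightarrow> t0 + t \<in> S \<and> f (t0 + t) \<le> \<kappa> * t * (2 * n + t)"
  shows False
proof -
  have "((\<lambda>y. (f y - f t0) / (y - t0)) \<longlongrightarrow> 0) (at t0 within S)"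
    using der by (simp add: has_field_derivative_iff)
  then have "\<forall>\<^sub>F y in at t0 within S. \<bar>(f y - f t0) / (y - t0)\<bar> < \<kappa> * \<bar>n\<bar>"
  proof -
    assume a: "((\<lambda>y. (f y - f t0) / (y - t0)) \<longlongrightarrow> 0) (at t0 within S)"
    have "\<kappa> * \<bar>n\<bar> > 0" using k n by simp
    from tendstoD[OF a this] show ?thesis by (simp add: dist_real_def)
  qed
  then obtain d where d: "d > 0" "\<And>y. y \<in> S \<Longrightarrow> y \<noteq> t0 \<Longrightarrow> dist y t0 < d \<Longrightarrow> \<bar>f y / (y - t0)\<bar> < \<kappa> * \<bar>n\<bar>"
    unfolding eventually_at using f0 by auto
  define m where "m = min d (min \<delta> \<bar>n\<bar>) / 2"
  have m: "m > 0" "m < d" "m < \<delta>" "m < \<bar>n\<bar>" using d dl n by (auto simp: m_def)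
  define t where "t = (if n > 0 then - m else m)"
  have t: "0 < \<bar>t\<bar>" "\<bar>t\<bar> < \<delta>" "t * n < 0" "\<bar>t\<bar> < d" "\<bar>t\<bar> < \<bar>n\<bar>"
    using m n by (auto simp: t_def mult_neg_pos mult_pos_neg)
  from bnd[OF t(1-3)] have S: "t0 + t \<in> S" and fb: "f (t0 + t) \<le> \<kappa> * t * (2 * n + t)" by auto
  have lt: "\<bar>f (t0 + t) / t\<bar> < \<kappa> * \<bar>n\<bar>" using d(2)[OF S] t by (auto simp: dist_real_def)
  show False
  proof (cases "n > 0")
    case True
    then have tn: "t < 0" "t > - n" using t m by (auto simp: t_def)
    have "f (t0 + t) / t \<ge> \<kappa> * (2 * n + t)"
      using fb tn by (simp add: le_divide_eq mult.commute mult.left_commute)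
    moreover have "\<kappa> * (2 * n + t) \<ge> \<kappa> * n" using k tn by (intro mult_left_mono) auto
    ultimately have "f (t0 + t) / t \<ge> \<kappa> * \<bar>n\<bar>" using True by simp
    then show False using lt abs_ge_self[of "f (t0 + t) / t"] by linarith
  next
    case False
    then have n0: "n < 0" using n by simp
    then have tn: "t > 0" "t < - n" using t m by (auto simp: t_def)
    have "f (t0 + t) / t \<le> \<kappa> * (2 * n + t)"
      using fb tn by (simp add: divide_le_eq mult.commute mult.left_commute)
    moreover have "\<kappa> * (2 * n + t) \<le> \<kappa> * n" using k tn by (intro mult_left_mono) auto
    ultimately have "f (t0 + t) / t \<le> - (\<kappa> * \<bar>n\<bar>)" using n0 by simp
    then show False using lt abs_ge_minus_self[of "f (t0 + t) / t"] by linarith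
  qed
qed

lemma sm2_more: assumes "sm 2 f"
  shows "\<forall>p\<in>cstrip. has_Dx (Dx f) p" "\<forall>p\<in>cstrip. has_Dy (Dy f) p"
proof -
  note a = assms[unfolded numeral_2_eq_2 sm.simps(2)]
  note b = a[unfolded One_nat_def sm.simps(2)]
  show "\<forall>p\<in>cstrip. has_Dx (Dx f) p" "\<forall>p\<in>cstrip. has_Dy (Dy f) p"
    using b by blast+
qed

lemma sq_lt_abs: "(a::real)^2 < r^2 \<Longrightarrow> r > 0 \<Longrightarrow> \<bar>a\<bar> < r"
  by (metis abs_of_pos power2_abs power_less_imp_less_base less_imp_le)

lemma sq_le_abs: "(a::real)^2 \<le> r^2 \<Longrightarrow> r > 0 \<Longrightarrow> \<bar>a\<bar> \<le> r"
  by (metis abs_of_pos power2_abs power2_le_imp_le less_imp_le)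

lemma dist_rho: "dist (s, t) (x1, y1) = sqrt ((s - x1)^2 + (t - y1)^2)"
  by (simp add: dist_Pair_Pair dist_real_def)

lemma dist_lt_rho: assumes r: "r > 0" shows "dist (s, t) (x1, y1) < r \<longleftrightarrow> (s - x1)^2 + (t - y1)^2 < r^2"
proof -
  have "r = sqrt (r^2)" using r by simp
  then have "dist (s, t) (x1, y1) < r \<longleftrightarrow> sqrt ((s - x1)^2 + (t - y1)^2) < sqrt (r^2)" by (simp add: dist_rho)
  also have "\<dots> \<longleftrightarrow> (s - x1)^2 + (t - y1)^2 < r^2" by (rule real_sqrt_less_iff)
  finally show ?thesis .
qed

lemma dist_le_rho: assumes r: "r > 0" shows "dist (s, t) (x1, y1) \<le> r \<longleftrightarrow> (s - x1)^2 + (t - y1)^2 \<le> r^2"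
proof -
  have "r = sqrt (r^2)" using r by simp
  then have "dist (s, t) (x1, y1) \<le> r \<longleftrightarrow> sqrt ((s - x1)^2 + (t - y1)^2) \<le> sqrt (r^2)" by (simp add: dist_rho)
  also have "\<dots> \<longleftrightarrow> (s - x1)^2 + (t - y1)^2 \<le> r^2" by (rule real_sqrt_le_iff)
  finally show ?thesis .
qed

locale mp =
  fixes v c :: "real \<times> real \<Rightarrow> real"
  assumes v_sm: "sm 2 v"
    and lapv: "\<And>z. z \<in> strip \<Longrightarrow> Dx (Dx v) z + Dy (Dy v) z = c z * v z"
    and c_nn: "\<And>z. z \<in> strip \<Longrightarrow> c z \<ge> 0"
    and c_cont: "continuous_on cstrip c"
begin

lemma v_cont: "continuous_on cstrip v" using sm_cont[OF v_sm] .

lemma v_parts: "\<And>p. p \<in> cstrip \<Longrightarrow> has_Dx v p" "\<And>p. p \<in> cstrip \<Longrightarrow> has_Dy v p"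
  "\<And>p. p \<in> cstrip \<Longrightarrow> has_Dx (Dx v) p" "\<And>p. p \<in> cstrip \<Longrightarrow> has_Dy (Dy v) p"
  using sm2_parts(1)[OF v_sm] sm2_more[OF v_sm] by auto

lemma strip_cstrip: "z \<in> strip \<Longrightarrow> z \<in> cstrip" by (auto simp: strip_def cstrip_def)

lemma max_test:
  fixes \<phi> :: "real \<times> real \<Rightarrow> real"
  assumes U: "open U" "U \<subseteq> strip" "(x, y) \<in> U"
    and phx: "\<And>s. ((\<lambda>s. \<phi> (s, y)) has_real_derivative \<phi>x s) (at s)"
    and phxx: "(\<phi>x has_real_derivative \<phi>xx) (at x)"
    and phy: "\<And>t. ((\<lambda>t. \<phi> (x, t)) has_real_derivative \<phi>y t) (at t)"
    and phyy: "(\<phi>y has_real_derivative \<phi>yy) (at y)"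
    and mx: "\<And>w. w \<in> U \<Longrightarrow> v w + \<phi> w \<le> v (x, y) + \<phi> (x, y)"
  shows "c (x, y) * v (x, y) + \<phi>xx + \<phi>yy \<le> 0"
proof -
  obtain r where r: "r > 0" "ball (x, y) r \<subseteq> U" using U open_contains_ball by blast
  have inU1: "(t, y) \<in> U" if "x - r < t" "t < x + r" for t
    using that r by (intro subsetD[OF r(2)]) (auto simp: dist_Pair_Pair dist_real_def)
  have inU2: "(x, t) \<in> U" if "y - r < t" "t < y + r" for t
    using that r by (intro subsetD[OF r(2)]) (auto simp: dist_Pair_Pair dist_real_def)
  have xy: "(x, y) \<in> strip" using U by auto
  have A: "Dx (Dx v) (x, y) + \<phi>xx \<le> 0"
  proof (rule max2[OF r(1)])
    show "((\<lambda>s. v (s, y) + \<phi> (s, y)) has_real_derivative Dx v (s, y) + \<phi>x s) (at s)" for s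
      using xy by (intro derivative_intros phx hx_at v_parts) (auto simp: strip_def cstrip_def)
    show "((\<lambda>s. Dx v (s, y) + \<phi>x s) has_real_derivative Dx (Dx v) (x, y) + \<phi>xx) (at x)"
      using xy by (intro derivative_intros phxx hx_at v_parts strip_cstrip)
    show "v (t, y) + \<phi> (t, y) \<le> v (x, y) + \<phi> (x, y)" if "x - r < t" "t < x + r" for t
      using mx inU1 that by blast
  qed
  have B: "Dy (Dy v) (x, y) + \<phi>yy \<le> 0"
  proof (rule max2[OF r(1)])
    show "((\<lambda>t. v (x, t) + \<phi> (x, t)) has_real_derivative Dy v (x, t) + \<phi>y t) (at t)"
      if "y - r < t" "t < y + r" for t
      using inU2[OF that] U by (intro derivative_intros phy hy_at v_parts strip_cstrip) auto
    show "((\<lambda>t. Dy v (x, t) + \<phi>y t) has_real_derivative Dy (Dy v) (x, y) + \<phi>yy) (at y)"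
      using xy by (intro derivative_intros phyy hy_at v_parts strip_cstrip)
    show "v (x, t) + \<phi> (x, t) \<le> v (x, y) + \<phi> (x, y)" if "y - r < t" "t < y + r" for t
      using mx inU2 that by blast
  qed
  show ?thesis using A B lapv[OF xy] by linarith
qed

end

context mp begin

lemma weak_max:
  assumes bx0: "\<And>y. 0 \<le> y \<Longrightarrow> y \<le> 1 \<Longrightarrow> v (0, y) \<le> 0"
    and by0: "\<And>x. x \<ge> 0 \<Longrightarrow> v (x, 0) \<le> 0" and by1: "\<And>x. x \<ge> 0 \<Longrightarrow> v (x, 1) \<le> 0"
    and bdd: "\<And>z. z \<in> cstrip \<Longrightarrow> v z \<le> M"
    and xy: "x \<ge> 0" "0 \<le> y" "y \<le> 1"
  shows "v (x, y) \<le> 0"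
proof (rule ccontr)
  assume "\<not> v (x, y) \<le> 0"
  then have vpos: "v (x, y) > 0" by simp
  have M: "M \<ge> v (x, y)" using bdd xy by (auto simp: cstrip_def)
  define \<epsilon> where "\<epsilon> = v (x, y) / (2 * (x + 3))"
  have e: "\<epsilon> > 0" using vpos xy by (simp add: \<epsilon>_def)
  have e2: "\<epsilon> * (x + 3) = v (x, y) / 2" using xy by (simp add: \<epsilon>_def field_simps)
  define W where "W = (\<lambda>z. v z + \<epsilon> * ((snd z)^2 - 2 - fst z))"
  have Wxy: "W (x, y) > 0"
  proof -
    have h: "-(x+3) \<le> y^2 - 2 - x" using zero_le_power2[of y] by linarith
    have "\<epsilon> * (-(x+3)) \<le> \<epsilon> * (y^2 - 2 - x)" using mult_left_mono[OF h] e by simp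
    then have "\<epsilon> * (y^2 - 2 - x) \<ge> - (\<epsilon> * (x + 3))" by (simp add: algebra_simps)
    then show ?thesis using e2 vpos by (simp add: W_def)
  qed
  define X where "X = x + M / \<epsilon> + 1"
  have eX: "\<epsilon> * X = \<epsilon> * x + M + \<epsilon>" using e by (simp add: X_def field_simps)
  have MX: "M / \<epsilon> \<ge> 0" using M vpos e by simp
  define K where "K = {0..X} \<times> {0..(1::real)}"
  have Kc: "compact K" unfolding K_def by (intro compact_Times compact_Icc)
  have xyK: "(x, y) \<in> K" using xy MX by (auto simp: K_def X_def)
  have KS: "K \<subseteq> cstrip" by (auto simp: K_def cstrip_def)
  have Wc: "continuous_on K W" unfolding W_def
    by (intro continuous_intros continuous_on_subset[OF v_cont KS])
  obtain zm where zm: "zm \<in> K" "\<And>w. w \<in> K \<Longrightarrow> W w \<le> W zm"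
    using continuous_attains_sup[OF Kc _ Wc] xyK by blast
  obtain xm ym where zmxy: "zm = (xm, ym)" by fastforce
  have Wzm: "W zm > 0" using zm(2)[OF xyK] Wxy by simp
  have rng: "0 \<le> xm" "xm \<le> X" "0 \<le> ym" "ym \<le> 1" using zm(1) by (auto simp: K_def zmxy)
  have ysq: "ym^2 \<le> 1" using rng by (simp add: power_le_one)
  have "xm \<noteq> 0"
  proof
    assume "xm = 0"
    then have "W zm \<le> 0 + \<epsilon> * (ym^2 - 2 - 0)" using bx0[of ym] rng by (simp add: W_def zmxy)
    also have "\<dots> < 0" using e ysq by (simp add: mult_pos_neg)
    finally show False using Wzm by simp
  qed
  moreover have "ym \<noteq> 0"
  proof
    assume "ym = 0"
    then have "W zm \<le> 0 + \<epsilon> * (0 - 2 - xm)" using by0[of xm] rng by (simp add: W_def zmxy)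
    also have "\<dots> < 0" using e rng by (simp add: mult_pos_neg)
    finally show False using Wzm by simp
  qed
  moreover have "ym \<noteq> 1"
  proof
    assume "ym = 1"
    then have "W zm \<le> 0 + \<epsilon> * (1 - 2 - xm)" using by1[of xm] rng by (simp add: W_def zmxy)
    also have "\<dots> < 0" using e rng by (simp add: mult_pos_neg)
    finally show False using Wzm by simp
  qed
  moreover have "xm \<noteq> X"
  proof
    assume xX: "xm = X"
    have "zm \<in> cstrip" using zm(1) KS by blast
    then have "W zm \<le> M + \<epsilon> * (ym^2 - 2 - X)" using bdd[of zm] xX by (simp add: W_def zmxy)
    also have "\<dots> \<le> M + \<epsilon> * (1 - 2 - X)" using e ysq by (intro add_left_mono mult_left_mono) auto
    also have "\<dots> < 0" using eX e xy by (simp add: algebra_simps) (smt (verit) mult_nonneg_nonneg)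
    finally show False using Wzm by simp
  qed
  ultimately have inner: "0 < xm" "xm < X" "0 < ym" "ym < 1" using rng by auto
  define U where "U = {0<..<X} \<times> {0<..<(1::real)}"
  have U: "open U" "U \<subseteq> strip" "(xm, ym) \<in> U" using inner
    by (auto simp: U_def strip_def intro!: open_Times)
  have UK: "U \<subseteq> K" by (auto simp: U_def K_def)
  have T: "c (xm, ym) * v (xm, ym) + 0 + 2 * \<epsilon> \<le> 0"
  proof (rule max_test[OF U, where \<phi> = "\<lambda>z. \<epsilon> * ((snd z)^2 - 2 - fst z)"])
    show "((\<lambda>s. \<epsilon> * ((snd (s, ym))\<^sup>2 - 2 - fst (s, ym))) has_real_derivative - \<epsilon>) (at s)" for s
      by (auto intro!: derivative_eq_intros)
    show "((\<lambda>s. - \<epsilon>) has_real_derivative 0) (at xm)" by (auto intro!: derivative_eq_intros)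
    show "((\<lambda>t. \<epsilon> * ((snd (xm, t))\<^sup>2 - 2 - fst (xm, t))) has_real_derivative 2 * \<epsilon> * t) (at t)" for t
      by (auto intro!: derivative_eq_intros)
    show "((\<lambda>t. 2 * \<epsilon> * t) has_real_derivative 2 * \<epsilon>) (at ym)" by (auto intro!: derivative_eq_intros)
    show "v w + \<epsilon> * ((snd w)\<^sup>2 - 2 - fst w) \<le> v (xm, ym) + \<epsilon> * ((snd (xm, ym))\<^sup>2 - 2 - fst (xm, ym))"
      if "w \<in> U" for w using zm(2)[of w] that UK by (auto simp: W_def zmxy)
  qed
  have "\<epsilon> * (ym^2 - 2 - xm) < 0" using e ysq inner by (simp add: mult_pos_neg)
  then have "v (xm, ym) > 0" using Wzm by (simp add: W_def zmxy)
  then have "c (xm, ym) * v (xm, ym) \<ge> 0" using c_nn[of "(xm, ym)"] U by auto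
  then show False using T e by linarith
qed

end

context mp begin

lemma hopf:
  assumes R: "R > 0"
    and ballS: "\<And>s t. (s - x1)^2 + (t - y1)^2 < R^2 \<Longrightarrow> (s, t) \<in> strip"
    and cbS: "\<And>s t. (s - x1)^2 + (t - y1)^2 \<le> R^2 \<Longrightarrow> (s, t) \<in> cstrip"
    and neg: "\<And>s t. (s - x1)^2 + (t - y1)^2 < R^2 \<Longrightarrow> v (s, t) < 0"
    and nonpos: "\<And>s t. (s - x1)^2 + (t - y1)^2 \<le> R^2 \<Longrightarrow> v (s, t) \<le> 0"
  shows "\<exists>\<kappa>>0. \<forall>s t. R^2/4 \<le> (s - x1)^2 + (t - y1)^2 \<longrightarrow> (s - x1)^2 + (t - y1)^2 \<le> R^2 \<longrightarrow>
            v (s, t) \<le> - \<kappa> * (R^2 - ((s - x1)^2 + (t - y1)^2))"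
proof -
  define \<rho> where "\<rho> = (\<lambda>z::real\<times>real. (fst z - x1)^2 + (snd z - y1)^2)"
  have \<rho>c: "continuous_on S \<rho>" for S unfolding \<rho>_def by (intro continuous_intros)
  define C where "C = {z. \<rho> z \<le> R^2}"
  have C: "C = cball (x1, y1) R"
    using dist_le_rho[OF R] by (auto simp: C_def \<rho>_def dist_commute)
  have R2: "R/2 > 0" using R by simp
  define I where "I = {z. \<rho> z \<le> R^2/4}"
  have I: "I = cball (x1, y1) (R/2)"
    using dist_le_rho[OF R2] by (auto simp: I_def \<rho>_def dist_commute power_divide)
  define A where "A = C \<inter> {z. R^2/4 \<le> \<rho> z}"
  have Ac: "compact A" unfolding A_def C
    by (intro compact_Int_closed compact_cball closed_Collect_le continuous_on_const \<rho>c)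
  have CS: "C \<subseteq> cstrip" using cbS by (auto simp: C_def \<rho>_def)
  have \<rho>nn: "\<rho> z \<ge> 0" for z by (simp add: \<rho>_def)
  have IC: "I \<subseteq> C"
  proof
    fix z assume "z \<in> I"
    then have "\<rho> z \<le> R^2/4" by (simp add: I_def)
    then show "z \<in> C" using \<rho>nn[of z] R by (simp add: C_def)
  qed
  obtain zi where zi: "zi \<in> I" "\<And>w. w \<in> I \<Longrightarrow> v w \<le> v zi"
    using continuous_attains_sup[of I v] I v_cont CS IC continuous_on_subset[of cstrip v I]
    by (metis compact_cball empty_iff centre_in_cball less_imp_le R2 subset_trans)
  define m0 where "m0 = v zi"
  have m0: "m0 < 0"
  proof -
    have "\<rho> zi \<le> R^2/4" using zi(1) by (simp add: I_def)
    moreover have "R^2 > 0" using R by simp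
    ultimately have "\<rho> zi < R^2" using \<rho>nn[of zi] by linarith
    then show ?thesis using neg[of "fst zi" "snd zi"] by (simp add: m0_def \<rho>_def)
  qed
  have "compact (c ` C)" unfolding C
    by (intro compact_continuous_image continuous_on_subset[OF c_cont]) (use CS C in auto)
  then obtain K where K: "K > 0" "\<And>z. z \<in> C \<Longrightarrow> norm (c z) \<le> K"
    using compact_imp_bounded bounded_pos by (metis imageI)
  define L where "L = 5 + K * R^2"
  define lam where "lam = L / R^2"
  have Lp: "L > 0" using K R by (simp add: L_def add_pos_nonneg)
  have lam: "lam > 0" "lam * R^2 = L" using R Lp by (auto simp: lam_def)
  have key: "4 * lam^2 * r - 4 * lam - K > 0" if "r > R^2/4" for r
  proof -
    have "4 * lam^2 * r > lam^2 * R^2" using that lam by simp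
    moreover have "lam^2 * R^2 - 4 * lam - K = lam + K * (L - 1)"
      using lam by (simp add: power2_eq_square L_def algebra_simps)
    moreover have "K * (L - 1) > 0" using K R by (simp add: L_def add_pos_nonneg)
    ultimately show ?thesis using lam by linarith
  qed
  define \<epsilon> where "\<epsilon> = - m0"
  have e: "\<epsilon> > 0" using m0 by (simp add: \<epsilon>_def)
  define h where "h = (\<lambda>z. exp (- lam * \<rho> z) - exp (- lam * R^2))"
  define W where "W = (\<lambda>z. v z + \<epsilon> * h z)"
  have claim: "W z \<le> 0" if zA: "z \<in> A" for z
  proof (rule ccontr)
    assume "\<not> W z \<le> 0"
    then have Wz: "W z > 0" by simp
    have Wc: "continuous_on A W" unfolding W_def h_def
      by (intro continuous_intros continuous_on_subset[OF v_cont] \<rho>c) (use CS in \<open>auto simp: A_def\<close>)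
    obtain zm where zm: "zm \<in> A" "\<And>w. w \<in> A \<Longrightarrow> W w \<le> W zm"
      using continuous_attains_sup[OF Ac _ Wc] zA by blast
    obtain xm ym where zmxy: "zm = (xm, ym)" by fastforce
    have Wzm: "W zm > 0" using zm(2)[OF zA] Wz by simp
    have rng: "R^2/4 \<le> \<rho> zm" "\<rho> zm \<le> R^2" using zm(1) by (auto simp: A_def C_def)
    have "\<rho> zm \<noteq> R^2/4"
    proof
      assume eq: "\<rho> zm = R^2/4"
      then have "zm \<in> I" by (simp add: I_def)
      then have vz: "v zm \<le> m0" using zi(2) by (simp add: m0_def)
      have "exp (- lam * \<rho> zm) \<le> 1" using lam rng R by simp
      moreover have "exp (- lam * R^2) > 0" by simp
      ultimately have "h zm < 1" unfolding h_def by linarith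
      then have "\<epsilon> * h zm < \<epsilon>" using e by simp
      then have "W zm < 0" using vz by (simp add: W_def \<epsilon>_def)
      then show False using Wzm by simp
    qed
    moreover have "\<rho> zm \<noteq> R^2"
    proof
      assume eq: "\<rho> zm = R^2"
      then have "h zm = 0" by (simp add: h_def)
      moreover have "v zm \<le> 0" using nonpos[of xm ym] eq by (simp add: \<rho>_def zmxy)
      ultimately show False using Wzm by (simp add: W_def)
    qed
    ultimately have inn: "R^2/4 < \<rho> zm" "\<rho> zm < R^2" using rng by auto
    define U where "U = {z. R^2/4 < \<rho> z} \<inter> {z. \<rho> z < R^2}"
    have U: "open U" "U \<subseteq> strip" "(xm, ym) \<in> U"
      unfolding U_def using inn ballS
      by (auto simp: zmxy \<rho>_def intro!: open_Int open_Collect_less continuous_intros)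
    have UA: "U \<subseteq> A" by (auto simp: U_def A_def C_def)
    define E where "E = exp (- lam * \<rho> zm)"
    have T: "c (xm, ym) * v (xm, ym) + \<epsilon> * E * (4 * lam^2 * (xm - x1)^2 - 2 * lam)
           + \<epsilon> * E * (4 * lam^2 * (ym - y1)^2 - 2 * lam) \<le> 0"
    proof (rule max_test[OF U, where \<phi> = "\<lambda>z. \<epsilon> * h z"])
      show "((\<lambda>s. \<epsilon> * h (s, ym)) has_real_derivative
          - 2 * \<epsilon> * lam * (s - x1) * exp (- lam * ((s - x1)^2 + (ym - y1)^2))) (at s)" for s
        unfolding h_def \<rho>_def by (auto intro!: derivative_eq_intros simp: algebra_simps power2_eq_square)
      show "((\<lambda>s. - 2 * \<epsilon> * lam * (s - x1) * exp (- lam * ((s - x1)^2 + (ym - y1)^2))) has_real_derivative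
          \<epsilon> * E * (4 * lam^2 * (xm - x1)^2 - 2 * lam)) (at xm)"
        unfolding E_def \<rho>_def zmxy by (auto intro!: derivative_eq_intros simp: algebra_simps power2_eq_square)
      show "((\<lambda>t. \<epsilon> * h (xm, t)) has_real_derivative
          - 2 * \<epsilon> * lam * (t - y1) * exp (- lam * ((xm - x1)^2 + (t - y1)^2))) (at t)" for t
        unfolding h_def \<rho>_def by (auto intro!: derivative_eq_intros simp: algebra_simps power2_eq_square)
      show "((\<lambda>t. - 2 * \<epsilon> * lam * (t - y1) * exp (- lam * ((xm - x1)^2 + (t - y1)^2))) has_real_derivative
          \<epsilon> * E * (4 * lam^2 * (ym - y1)^2 - 2 * lam)) (at ym)"
        unfolding E_def \<rho>_def zmxy by (auto intro!: derivative_eq_intros simp: algebra_simps power2_eq_square)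
      show "v w + \<epsilon> * h w \<le> v (xm, ym) + \<epsilon> * h (xm, ym)" if "w \<in> U" for w
        using zm(2)[of w] that UA by (auto simp: W_def zmxy)
    qed
    have sum: "\<epsilon> * E * (4 * lam^2 * (xm - x1)^2 - 2 * lam) + \<epsilon> * E * (4 * lam^2 * (ym - y1)^2 - 2 * lam)
        = \<epsilon> * E * (4 * lam^2 * \<rho> zm - 4 * lam)"
      by (simp add: \<rho>_def zmxy algebra_simps)
    have Epos: "E > 0" by (simp add: E_def)
    have hE: "0 \<le> h zm" "h zm \<le> E" using inn lam by (auto simp: h_def E_def)
    have czm: "0 \<le> c zm" "c zm \<le> K"
      using c_nn[of zm] U K(2)[of zm] rng by (auto simp: zmxy C_def)
    have vgt: "v zm > - \<epsilon> * h zm" using Wzm by (simp add: W_def)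
    have "c zm * v zm \<ge> c zm * (- \<epsilon> * h zm)" using czm vgt by (intro mult_left_mono) auto
    moreover have "c zm * (\<epsilon> * h zm) \<le> K * (\<epsilon> * E)"
      using czm hE e by (intro mult_mono) auto
    ultimately have cv: "c zm * v zm \<ge> - (K * \<epsilon> * E)" by (simp add: algebra_simps)
    have "\<epsilon> * E * (4 * lam^2 * \<rho> zm - 4 * lam - K) > 0"
      using key[OF inn(1)] e Epos by simp
    then show False using T sum cv by (simp add: zmxy algebra_simps)
  qed
  define \<kappa> where "\<kappa> = \<epsilon> * lam * exp (- lam * R^2)"
  have kpos: "\<kappa> > 0" using e lam by (simp add: \<kappa>_def)
  show ?thesis
  proof (intro exI[of _ \<kappa>] conjI kpos allI impI)
    fix s t assume a1: "R^2/4 \<le> (s - x1)^2 + (t - y1)^2" and a2: "(s - x1)^2 + (t - y1)^2 \<le> R^2"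
    define r where "r = (s - x1)^2 + (t - y1)^2"
    have inA: "(s, t) \<in> A" using a1 a2 by (simp add: A_def C_def \<rho>_def)
    have W0: "v (s, t) + \<epsilon> * h (s, t) \<le> 0" using claim[OF inA] by (simp add: W_def)
    have "exp (- lam * r) = exp (- lam * R^2) * exp (lam * (R^2 - r))"
      by (simp add: exp_add[symmetric] algebra_simps)
    also have "\<dots> \<ge> exp (- lam * R^2) * (1 + lam * (R^2 - r))"
      by (intro mult_left_mono exp_ge_add_one_self) simp
    finally have "h (s, t) \<ge> exp (- lam * R^2) * (lam * (R^2 - r))"
      by (simp add: h_def \<rho>_def r_def algebra_simps)
    then have "\<epsilon> * h (s, t) \<ge> \<epsilon> * (exp (- lam * R^2) * (lam * (R^2 - r)))"
      using e by (intro mult_left_mono) auto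
    then show "v (s, t) \<le> - \<kappa> * (R^2 - ((s - x1)^2 + (t - y1)^2))"
      using W0 by (simp add: \<kappa>_def r_def algebra_simps)
  qed
qed

end

lemma annulus_step:
  fixes n m d t \<kappa> :: real
  assumes nm: "n^2 + m^2 = d^2" and d: "d > 0" and tn: "t * n < 0" and t1: "\<bar>t\<bar> < \<bar>n\<bar>" and t2: "\<bar>t\<bar> < 3 * d / 8"
  shows "d^2/4 \<le> (n + t)^2 + m^2" "(n + t)^2 + m^2 \<le> d^2"
    "- \<kappa> * (d^2 - ((n + t)^2 + m^2)) = \<kappa> * t * (2 * n + t)"
proof -
  have e: "(n + t)^2 + m^2 = d^2 + 2 * t * n + t^2" using nm by (simp add: power2_eq_square algebra_simps)
  have "n^2 \<le> d^2" using nm zero_le_power2[of m] by linarith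
  then have an: "\<bar>n\<bar> \<le> d" using d by (intro sq_le_abs)
  have tnabs: "t * n = - (\<bar>t\<bar> * \<bar>n\<bar>)" using tn by (simp add: abs_mult[symmetric])
  have "t^2 = \<bar>t\<bar> * \<bar>t\<bar>" by (simp add: power2_eq_square abs_mult[symmetric])
  also have "\<dots> \<le> \<bar>t\<bar> * \<bar>n\<bar>" using t1 by (intro mult_left_mono) auto
  finally have tt: "t^2 \<le> \<bar>t\<bar> * \<bar>n\<bar>" .
  show "(n + t)^2 + m^2 \<le> d^2" using e tt tnabs mult_nonneg_nonneg[of "\<bar>t\<bar>" "\<bar>n\<bar>"] by linarith
  have "\<bar>t\<bar> * \<bar>n\<bar> \<le> \<bar>t\<bar> * d" using an by (intro mult_left_mono) auto
  also have "\<dots> \<le> (3 * d / 8) * d" using t2 d by (intro mult_right_mono) auto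
  finally have "\<bar>t\<bar> * \<bar>n\<bar> \<le> 3 * d^2 / 8" by (simp add: power2_eq_square)
  then show "d^2/4 \<le> (n + t)^2 + m^2" using e tnabs zero_le_power2[of t] by linarith
  show "- \<kappa> * (d^2 - ((n + t)^2 + m^2)) = \<kappa> * t * (2 * n + t)"
  proof -
    have q: "d^2 - ((n + t)^2 + m^2) = - (2 * t * n + t^2)" unfolding e by simp
    show ?thesis unfolding q by (simp add: power2_eq_square algebra_simps)
  qed
qed

lemma Rplus_eq: "R_plus = {0<..} \<times> {0<..<1}" by (auto simp: R_plus_def)
lemma Rplus_open: "open R_plus" unfolding Rplus_eq by (intro open_Times open_greaterThan open_greaterThanLessThan)
lemma Rplus_strip: "R_plus \<subseteq> strip" by (auto simp: R_plus_def strip_def)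
lemma Rplus_cstrip: "R_plus \<subseteq> cstrip" by (auto simp: R_plus_def cstrip_def)

context mp begin

lemma loc_max_deriv:
  assumes z: "(a, b) \<in> R_plus" and mx: "\<And>w. w \<in> R_plus \<Longrightarrow> v w \<le> v (a, b)"
  shows "((\<lambda>s. v (s, b)) has_real_derivative 0) (at a)" "((\<lambda>t. v (a, t)) has_real_derivative 0) (at b)"
proof -
  obtain r where r: "r > 0" "ball (a, b) r \<subseteq> R_plus" using Rplus_open z open_contains_ball by blast
  have zs: "(a, b) \<in> strip" "(a, b) \<in> cstrip" using z Rplus_strip Rplus_cstrip by auto
  have dx: "((\<lambda>s. v (s, b)) has_real_derivative Dx v (a, b)) (at a)" using zs by (intro hx_at v_parts)
  have dy: "((\<lambda>t. v (a, t)) has_real_derivative Dy v (a, b)) (at b)" using zs by (intro hy_at v_parts)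
  have "Dx v (a, b) = 0"
  proof (rule DERIV_local_max[OF dx r(1)], intro allI impI)
    fix s assume "\<bar>a - s\<bar> < r"
    then have "(s, b) \<in> R_plus" using r by (intro subsetD[OF r(2)]) (auto simp: dist_Pair_Pair dist_real_def abs_minus_commute)
    then show "v (s, b) \<le> v (a, b)" by (rule mx)
  qed
  then show "((\<lambda>s. v (s, b)) has_real_derivative 0) (at a)" using dx by simp
  have "Dy v (a, b) = 0"
  proof (rule DERIV_local_max[OF dy r(1)], intro allI impI)
    fix t assume "\<bar>b - t\<bar> < r"
    then have "(a, t) \<in> R_plus" using r by (intro subsetD[OF r(2)]) (auto simp: dist_Pair_Pair dist_real_def abs_minus_commute)
    then show "v (a, t) \<le> v (a, b)" by (rule mx)
  qed
  then show "((\<lambda>t. v (a, t)) has_real_derivative 0) (at b)" using dy by simp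
qed

end

context mp begin

lemma strong_max:
  assumes Qle: "\<And>x y. x \<ge> 0 \<Longrightarrow> 0 \<le> y \<Longrightarrow> y \<le> 1 \<Longrightarrow> v (x, y) \<le> 0"
  shows "(\<forall>z\<in>R_plus. v z < 0) \<or> (\<forall>z\<in>R_plus. v z = 0)"
proof -
  have Qle': "v w \<le> 0" if "w \<in> R_plus" for w
    using that Qle[of "fst w" "snd w"] by (auto simp: R_plus_def)
  define Z where "Z = {z \<in> R_plus. v z = 0}"
  have openZ: "open Z" unfolding open_contains_ball
  proof
    fix z0 assume z0Z: "z0 \<in> Z"
    obtain x0 y0 where z0: "z0 = (x0, y0)" by fastforce
    have z0R: "z0 \<in> R_plus" and vz0: "v z0 = 0" using z0Z by (auto simp: Z_def)
    define r where "r = min x0 (min y0 (1 - y0))"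
    have r: "r > 0" using z0R by (auto simp: r_def R_plus_def z0)
    have ballR: "ball z0 r \<subseteq> R_plus"
    proof
      fix w assume "w \<in> ball z0 r"
      then have d: "dist w z0 < r" by (simp add: dist_commute)
      have "dist (fst w) x0 < r" "dist (snd w) y0 < r"
        using dist_fst_le[of w z0] dist_snd_le[of w z0] d by (auto simp: z0)
      then show "w \<in> R_plus" by (auto simp: R_plus_def r_def dist_real_def)
    qed
    have "ball z0 (r/4) \<subseteq> Z"
    proof
      fix z1 assume z1b: "z1 \<in> ball z0 (r/4)"
      have z1R: "z1 \<in> R_plus" using z1b ballR r by auto
      show "z1 \<in> Z"
      proof (rule ccontr)
        assume "z1 \<notin> Z"
        then have vz1: "v z1 \<noteq> 0" using z1R by (auto simp: Z_def)
        define Zc where "Zc = {w \<in> cball z0 (r/2). v w = 0}"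
        have cbR: "cball z0 (r/2) \<subseteq> R_plus" using ballR r by (intro subset_trans[OF _ ballR]) auto
        have "closed Zc" unfolding Zc_def
          by (intro continuous_closed_preimage_constant continuous_on_subset[OF v_cont] closed_cball)
             (use cbR Rplus_cstrip in auto)
        moreover have "z0 \<in> Zc" using vz0 r by (auto simp: Zc_def)
        ultimately obtain z' where z': "z' \<in> Zc" "\<And>w. w \<in> Zc \<Longrightarrow> dist z1 z' \<le> dist z1 w"
          using distance_attains_inf by blast
        define d where "d = dist z1 z'"
        have dle: "d \<le> dist z1 z0" using z'(2)[OF \<open>z0 \<in> Zc\<close>] by (simp add: d_def)
        have dlt: "d < r/4" using dle z1b by (simp add: dist_commute)
        have "z' \<noteq> z1" using z'(1) vz1 by (auto simp: Zc_def)
        then have dpos: "d > 0" by (simp add: d_def)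
        obtain x1 y1 where z1: "z1 = (x1, y1)" by fastforce
        obtain a b where z'ab: "z' = (a, b)" by fastforce
        have inc: "w \<in> cball z0 (r/2)" if "dist w z1 \<le> d" for w
        proof -
          have "dist z0 w \<le> dist z0 z1 + dist z1 w" by (rule dist_triangle)
          also have "\<dots> < r/4 + d" using z1b that by (simp add: dist_commute)
          also have "\<dots> < r/2" using dlt by simp
          finally show ?thesis by simp
        qed
        have H1: "dist (s, t) z1 < d" if "(s - x1)^2 + (t - y1)^2 < d^2" for s t
          using dist_lt_rho[OF dpos, of s t x1 y1] that z1 by simp
        have H2: "dist (s, t) z1 \<le> d" if "(s - x1)^2 + (t - y1)^2 \<le> d^2" for s t
          using dist_le_rho[OF dpos, of s t x1 y1] that z1 by simp
        obtain \<kappa> where k: "\<kappa> > 0" and kin: "\<And>s t. d^2/4 \<le> (s - x1)^2 + (t - y1)^2 \<Longrightarrow> (s - x1)^2 + (t - y1)^2 \<le> d^2 \<Longrightarrow>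
            v (s, t) \<le> - \<kappa> * (d^2 - ((s - x1)^2 + (t - y1)^2))"
        proof -
          have "\<exists>\<kappa>>0. \<forall>s t. d^2/4 \<le> (s - x1)^2 + (t - y1)^2 \<longrightarrow> (s - x1)^2 + (t - y1)^2 \<le> d^2 \<longrightarrow>
            v (s, t) \<le> - \<kappa> * (d^2 - ((s - x1)^2 + (t - y1)^2))"
          proof (rule hopf[OF dpos])
            fix s t assume a: "(s - x1)^2 + (t - y1)^2 < d^2"
            have "(s, t) \<in> R_plus" using inc[of "(s,t)"] H1[OF a] cbR by auto
            then show "(s, t) \<in> strip" using Rplus_strip by auto
            have "(s, t) \<notin> Zc"
            proof
              assume "(s, t) \<in> Zc"
              from z'(2)[OF this] H1[OF a] show False by (simp add: d_def dist_commute)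
            qed
            then have "v (s, t) \<noteq> 0" using inc[of "(s,t)"] H1[OF a] by (auto simp: Zc_def)
            then show "v (s, t) < 0" using Qle'[OF \<open>(s, t) \<in> R_plus\<close>] by simp
          next
            fix s t assume a: "(s - x1)^2 + (t - y1)^2 \<le> d^2"
            have "(s, t) \<in> R_plus" using inc[of "(s,t)"] H2[OF a] cbR by auto
            then show "(s, t) \<in> cstrip" "v (s, t) \<le> 0" using Rplus_cstrip Qle' by auto
          qed
          then show ?thesis using that by blast
        qed
        have z'R: "z' \<in> R_plus" using z'(1) cbR by (auto simp: Zc_def)
        have vz': "v (a, b) = 0" using z'(1) by (simp add: Zc_def z'ab)
        have rho': "(a - x1)^2 + (b - y1)^2 = d^2"
        proof -
          have "sqrt ((a - x1)^2 + (b - y1)^2) = d" using dist_rho[of a b x1 y1] by (simp add: d_def z1 z'ab dist_commute)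
          then show ?thesis by (metis abs_of_nonneg add_nonneg_nonneg real_sqrt_pow2 zero_le_power2)
        qed
        have mx: "v w \<le> v (a, b)" if "w \<in> R_plus" for w using Qle'[OF that] vz' by simp
        note LD = loc_max_deriv[OF z'R[unfolded z'ab] mx]
        show False
        proof (cases "a - x1 = 0")
          case False
          define n where "n = a - x1"
          show False
          proof (rule hopf_1d[OF LD(1)[THEN has_field_derivative_at_within, of UNIV] vz' False k])
            show "min \<bar>a - x1\<bar> (3 * d / 8) > 0" using False dpos by simp
            fix t assume t: "0 < \<bar>t\<bar>" "\<bar>t\<bar> < min \<bar>a - x1\<bar> (3 * d / 8)" "t * (a - x1) < 0"
            have nm: "(a - x1)^2 + (b - y1)^2 = d^2" by (rule rho')
            note st = annulus_step(1,2)[OF nm dpos t(3)] annulus_step(3)[OF nm dpos t(3), of \<kappa>] t(2)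
            have "v (a + t, b) \<le> - \<kappa> * (d^2 - (((a + t) - x1)^2 + (b - y1)^2))"
              by (rule kin) (use st in \<open>auto simp: algebra_simps\<close>)
            also have "\<dots> = \<kappa> * t * (2 * (a - x1) + t)"
              using st by (simp add: algebra_simps)
            finally show "a + t \<in> UNIV \<and> v (a + t, b) \<le> \<kappa> * t * (2 * (a - x1) + t)" by simp
          qed
        next
          case True
          then have nb: "b - y1 \<noteq> 0" using rho' dpos by auto
          show False
          proof (rule hopf_1d[OF LD(2)[THEN has_field_derivative_at_within, of UNIV] vz' nb k])
            show "min \<bar>b - y1\<bar> (3 * d / 8) > 0" using nb dpos by simp
            fix t assume t: "0 < \<bar>t\<bar>" "\<bar>t\<bar> < min \<bar>b - y1\<bar> (3 * d / 8)" "t * (b - y1) < 0"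
            have nm: "(b - y1)^2 + (a - x1)^2 = d^2" using rho' by simp
            note st = annulus_step(1,2)[OF nm dpos t(3)] annulus_step(3)[OF nm dpos t(3), of \<kappa>] t(2)
            have "v (a, b + t) \<le> - \<kappa> * (d^2 - ((a - x1)^2 + ((b + t) - y1)^2))"
              by (rule kin) (use st in \<open>auto simp: algebra_simps\<close>)
            also have "\<dots> = \<kappa> * t * (2 * (b - y1) + t)"
              using st by (simp add: algebra_simps)
            finally show "b + t \<in> UNIV \<and> v (a, b + t) \<le> \<kappa> * t * (2 * (b - y1) + t)" by simp
          qed
        qed
      qed
    qed
    then show "\<exists>e>0. ball z0 e \<subseteq> Z" using r by (intro exI[of _ "r/4"]) auto
  qed
  have conn: "connected R_plus" unfolding Rplus_eq
    by (intro convex_connected convex_Times convex_real_interval)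
  have oZ: "openin (top_of_set R_plus) Z" using openZ Rplus_open by (simp add: openin_open_eq Z_def)
  have cZ: "closedin (top_of_set R_plus) Z" unfolding Z_def
    by (intro continuous_closedin_preimage_constant continuous_on_subset[OF v_cont Rplus_cstrip])
  have "Z = {} \<or> Z = R_plus" using conn oZ cZ unfolding connected_clopen by blast
  then show ?thesis
  proof
    assume "Z = {}"
    then have "\<forall>z\<in>R_plus. v z \<noteq> 0" by (auto simp: Z_def)
    then show ?thesis using Qle' by (meson less_le)
  next
    assume "Z = R_plus"
    then show ?thesis by (auto simp: Z_def)
  qed
qed

end

context mp begin

lemma hopf_top:
  assumes Qle: "\<And>x y. x \<ge> 0 \<Longrightarrow> 0 \<le> y \<Longrightarrow> y \<le> 1 \<Longrightarrow> v (x, y) \<le> 0"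
    and neg: "\<And>z. z \<in> R_plus \<Longrightarrow> v z < 0"
    and x0: "x0 > 0" and v0: "v (x0, 1) = 0" and dy0: "Dy v (x0, 1) = 0"
  shows False
proof -
  define R where "R = min x0 (1/2) / 2"
  have R: "R > 0" "R \<le> x0 / 2" "R \<le> 1/4" using x0 by (auto simp: R_def)
  have Rs: "(s, t) \<in> R_plus" if "(s - x0)^2 + (t - (1 - R))^2 < R^2" for s t
  proof -
    have "(s - x0)^2 < R^2" "(t - (1 - R))^2 < R^2" using that zero_le_power2 by (smt (verit))+
    then have "\<bar>s - x0\<bar> < R" "\<bar>t - (1 - R)\<bar> < R" using R by (auto intro: sq_lt_abs)
    then show ?thesis using R by (auto simp: R_plus_def)
  qed
  have Rc: "s \<ge> 0 \<and> 0 \<le> t \<and> t \<le> 1" if "(s - x0)^2 + (t - (1 - R))^2 \<le> R^2" for s t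
  proof -
    have "(s - x0)^2 \<le> R^2" "(t - (1 - R))^2 \<le> R^2" using that zero_le_power2 by (smt (verit))+
    then have "\<bar>s - x0\<bar> \<le> R" "\<bar>t - (1 - R)\<bar> \<le> R" using R by (auto intro: sq_le_abs)
    then show ?thesis using R by auto
  qed
  obtain \<kappa> where k: "\<kappa> > 0" and kin: "\<And>s t. R^2/4 \<le> (s - x0)^2 + (t - (1 - R))^2 \<Longrightarrow> (s - x0)^2 + (t - (1 - R))^2 \<le> R^2 \<Longrightarrow>
      v (s, t) \<le> - \<kappa> * (R^2 - ((s - x0)^2 + (t - (1 - R))^2))"
  proof -
    have "\<exists>\<kappa>>0. \<forall>s t. R^2/4 \<le> (s - x0)^2 + (t - (1 - R))^2 \<longrightarrow> (s - x0)^2 + (t - (1 - R))^2 \<le> R^2 \<longrightarrow>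
      v (s, t) \<le> - \<kappa> * (R^2 - ((s - x0)^2 + (t - (1 - R))^2))"
    proof (rule hopf[OF R(1)])
      fix s t assume a: "(s - x0)^2 + (t - (1 - R))^2 < R^2"
      show "(s, t) \<in> strip" using Rs[OF a] Rplus_strip by auto
      show "v (s, t) < 0" using Rs[OF a] neg by auto
    next
      fix s t assume a: "(s - x0)^2 + (t - (1 - R))^2 \<le> R^2"
      show "(s, t) \<in> cstrip" using Rc[OF a] by (auto simp: cstrip_def)
      show "v (s, t) \<le> 0" using Rc[OF a] Qle by auto
    qed
    then show ?thesis using that by blast
  qed
  have c1: "(x0, 1) \<in> cstrip" by (simp add: cstrip_def)
  have der: "((\<lambda>t. v (x0, t)) has_real_derivative 0) (at 1 within {0..1})"
    using hasDy_D[OF v_parts(2)[OF c1]] dy0 by simp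
  have Rne: "R \<noteq> 0" using R by simp
  show False
  proof (rule hopf_1d[OF der v0 Rne k])
    show "3 * R / 8 > 0" using R by simp
    fix t assume t: "0 < \<bar>t\<bar>" "\<bar>t\<bar> < 3 * R / 8" "t * R < 0"
    have tneg: "t < 0" using t R by (simp add: mult_less_0_iff)
    have t1: "\<bar>t\<bar> < \<bar>R\<bar>" using t R by simp
    have nm: "R^2 + 0^2 = R^2" by simp
    note st = annulus_step(1,2)[OF nm R(1) t(3) t1 t(2)] annulus_step(3)[OF nm R(1) t(3) t1 t(2), of \<kappa>]
    have "v (x0, 1 + t) \<le> - \<kappa> * (R^2 - ((x0 - x0)^2 + ((1 + t) - (1 - R))^2))"
      by (rule kin) (use st in \<open>auto simp: algebra_simps\<close>)
    also have "\<dots> = \<kappa> * t * (2 * R + t)" using st by (simp add: algebra_simps)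
    finally show "1 + t \<in> {0..1} \<and> v (x0, 1 + t) \<le> \<kappa> * t * (2 * R + t)"
      using tneg t R by auto
  qed
qed

end

declare sm.simps[simp del]

lemma closure_strip: "closure strip = cstrip"
proof -
  have "strip = UNIV \<times> {0<..<(1::real)}" by (auto simp: strip_def)
  moreover have "cstrip = UNIV \<times> {0..(1::real)}" by (auto simp: cstrip_def)
  ultimately show ?thesis
    using closure_Times[of "UNIV::real set" "{0<..<(1::real)}"] closure_greaterThanLessThan[of "0::real" 1] by simp
qed

lemma strip_ge_closure: fixes F :: "real \<times> real \<Rightarrow> real"
  assumes a: "continuous_on cstrip F" "\<And>z. z \<in> strip \<Longrightarrow> c \<le> F z" "z \<in> cstrip"
  shows "c \<le> F z"
proof (rule continuous_ge_on_closure[of strip F z c])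
  show "continuous_on (closure strip) F" unfolding closure_strip by (rule a(1))
  show "z \<in> closure strip" unfolding closure_strip by (rule a(3))
  show "\<And>x. x \<in> strip \<Longrightarrow> c \<le> F x" by (rule a(2))
qed

lemma strip_eq_closure: fixes F :: "real \<times> real \<Rightarrow> real"
  assumes a: "continuous_on cstrip F" "\<And>z. z \<in> strip \<Longrightarrow> F z = 0" "z \<in> cstrip"
  shows "F z = 0"
proof -
  have "0 \<le> F z" by (rule strip_ge_closure[OF a(1) _ a(3)]) (simp add: a(2))
  moreover have c: "continuous_on cstrip (\<lambda>z. - F z)" using a(1) by (rule continuous_on_minus)
  have "0 \<le> - F z" by (rule strip_ge_closure[OF c _ a(3)]) (simp add: a(2))
  ultimately show ?thesis by simp
qed

lemma sm_Suc_D: "sm (Suc k) f \<Longrightarrow> sm k (Dx f) \<and> sm k (Dy f) \<and> (\<forall>p\<in>cstrip. has_Dx f p \<and> has_Dy f p)"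
  by (simp add: sm.simps(2))

lemma Dx_eqI': "((\<lambda>t. f (t, y)) has_real_derivative d) (at x) \<Longrightarrow> Dx f (x, y) = d"
  using Dx_eqI[of f "(x, y)" d] by simp

lemma Dy_eqI': "((\<lambda>t. f (x, t)) has_real_derivative d) (at y) \<Longrightarrow> (x, y) \<in> strip \<Longrightarrow> Dy f (x, y) = d"
  using Dy_eqI[of f "(x, y)" d] at_y[of "(x, y)"] by (auto simp: strip_def)

lemma Dy_eqI'': "((\<lambda>t. f (x, t)) has_real_derivative d) (at y within {0..1}) \<Longrightarrow> 0 \<le> y \<Longrightarrow> y \<le> 1 \<Longrightarrow> Dy f (x, y) = d"
  using Dy_eqI[of f "(x, y)" d] by auto

lemma solve2:
  fixes a b X Y G :: real
  assumes e1: "a * X + b * Y = - G * (a^2 + b^2)" and e2: "a * Y - b * X = 0" and nz: "a^2 + b^2 \<noteq> 0"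
  shows "X = - G * a" "Y = - G * b"
proof -
  have "(a^2 + b^2) * X = a * (a * X + b * Y) - b * (a * Y - b * X)" by (simp add: algebra_simps power2_eq_square)
  also have "\<dots> = (a^2 + b^2) * (- G * a)" unfolding e1 e2 by (simp add: algebra_simps)
  finally have h: "(a^2 + b^2) * X = (a^2 + b^2) * (- G * a)" .
  show "X = - G * a" using mult_left_cancel[OF nz] h by blast
  have "(a^2 + b^2) * Y = b * (a * X + b * Y) + a * (a * Y - b * X)" by (simp add: algebra_simps power2_eq_square)
  also have "\<dots> = (a^2 + b^2) * (- G * b)" unfolding e1 e2 by (simp add: algebra_simps)
  finally have h: "(a^2 + b^2) * Y = (a^2 + b^2) * (- G * b)" .
  show "Y = - G * b" using mult_left_cancel[OF nz] h by blast
qed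

lemma hbound: "holder_Ckb k b f \<Longrightarrow> length ds \<le> k \<Longrightarrow> \<exists>B. \<forall>z\<in>cstrip. \<bar>pd ds f z\<bar> \<le> B"
  unfolding holder_Ckb_def bounded_iff by (metis image_eqI real_norm_def)

locale setting =
  fixes g :: "real \<Rightarrow> real" and \<mu> \<alpha> \<beta> c0 :: real and \<psi> \<eta> :: "real \<times> real \<Rightarrow> real"
  assumes gd: "\<And>x. g differentiable at x" and gd2: "\<And>x. deriv g differentiable at x"
    and gnp: "\<And>s. deriv g s \<le> 0"
    and W1: "\<And>z. z \<in> strip \<Longrightarrow> lap \<psi> z = - g (\<psi> z) * gradsq \<eta> z"
    and W2a: "\<And>x. \<psi> (x, 1) = 1" and W2b: "\<And>x. \<psi> (x, 0) = 0"
    and W3: "\<And>x. (Dy \<psi> (x, 1))^2 = (\<mu> - 2 * \<alpha> * (\<eta> (x, 1) - 1)) * gradsq \<eta> (x, 1)"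
    and W4a: "\<And>z. z \<in> strip \<Longrightarrow> lap \<eta> z = 0" and W4b: "\<And>x. \<eta> (x, 0) = 0"
    and H\<psi>: "holder_Ckb 3 \<beta> \<psi>" and H\<eta>: "holder_Ckb 3 \<beta> \<eta>"
    and W7: "\<And>x y. 0 \<le> y \<Longrightarrow> y \<le> 1 \<Longrightarrow> \<psi> (-x, y) = \<psi> (x, y) \<and> \<eta> (-x, y) = \<eta> (x, y)"
    and c0: "c0 > 0" and W8: "\<And>z. z \<in> strip \<Longrightarrow> (\<mu> - 2 * \<alpha> * (\<eta> z - 1)) * gradsq \<eta> z \<ge> c0"
begin

definition "DD = (\<lambda>z. Dx \<eta> z * Dx \<eta> z + Dy \<eta> z * Dy \<eta> z)"
definition "uu = (\<lambda>z. (Dx \<psi> z * Dx \<eta> z + Dy \<psi> z * Dy \<eta> z) / DD z)"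
definition "vv = (\<lambda>z. (Dy \<psi> z * Dx \<eta> z - Dx \<psi> z * Dy \<eta> z) / DD z)"
definition "Lam = (\<lambda>z. \<mu> - 2 * \<alpha> * (\<eta> z - 1))"

lemma gradsq_DD: "gradsq \<eta> z = DD z" by (simp add: gradsq_def DD_def power2_eq_square)
lemma vvel_vv: "vvel \<psi> \<eta> z = vv z" by (simp add: vvel_def vv_def gradsq_DD)

lemma sm3: "sm 3 \<psi>" "sm 3 \<eta>" using holder_sm[OF H\<psi>] holder_sm[OF H\<eta>] .

lemma sm2D: "sm 2 (Dx \<psi>)" "sm 2 (Dy \<psi>)" "sm 2 (Dx \<eta>)" "sm 2 (Dy \<eta>)"
proof -
  have "sm (Suc 2) \<psi>" "sm (Suc 2) \<eta>" using sm3 by simp_all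
  then show "sm 2 (Dx \<psi>)" "sm 2 (Dy \<psi>)" "sm 2 (Dx \<eta>)" "sm 2 (Dy \<eta>)" using sm_Suc_D by blast+
qed

lemma sm2: "sm 2 \<psi>" "sm 2 \<eta>" using sm_mono_le[OF sm3(1)] sm_mono_le[OF sm3(2)] by auto

lemma DD_sm: "sm 2 DD" unfolding DD_def by (intro sm_add sm_mult sm2D)

lemma cont: "continuous_on cstrip \<psi>" "continuous_on cstrip \<eta>" "continuous_on cstrip (Dx \<psi>)"
  "continuous_on cstrip (Dy \<psi>)" "continuous_on cstrip (Dx \<eta>)" "continuous_on cstrip (Dy \<eta>)"
  "continuous_on cstrip DD"
  using sm_cont sm2 sm2D DD_sm by blast+

lemma has: "\<And>z. z \<in> cstrip \<Longrightarrow> has_Dx \<psi> z" "\<And>z. z \<in> cstrip \<Longrightarrow> has_Dy \<psi> z"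
  "\<And>z. z \<in> cstrip \<Longrightarrow> has_Dx \<eta> z" "\<And>z. z \<in> cstrip \<Longrightarrow> has_Dy \<eta> z"
  using sm2_parts(1)[OF sm2(1)] sm2_parts(1)[OF sm2(2)] by auto

lemma DD_low: "\<exists>\<delta>>0. \<forall>z\<in>cstrip. DD z \<ge> \<delta>"
proof -
  obtain B where B: "\<And>z. z \<in> cstrip \<Longrightarrow> \<bar>\<eta> z\<bar> \<le> B" using hbound[OF H\<eta>, of "[]"] by auto
  define KL where "KL = \<bar>\<mu>\<bar> + 2 * \<bar>\<alpha>\<bar> * (\<bar>B\<bar> + 1) + 1"
  have "2 * \<bar>\<alpha>\<bar> * (\<bar>B\<bar> + 1) \<ge> 0" by simp
  then have KLp: "KL > 0" unfolding KL_def using abs_ge_zero[of \<mu>] by linarith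
  have LK: "Lam z \<le> KL" if "z \<in> cstrip" for z
  proof -
    have "\<bar>\<eta> z - 1\<bar> \<le> \<bar>B\<bar> + 1" using B[OF that] by linarith
    then have "\<bar>\<alpha>\<bar> * \<bar>\<eta> z - 1\<bar> \<le> \<bar>\<alpha>\<bar> * (\<bar>B\<bar> + 1)" by (intro mult_left_mono) auto
    then have "- (2 * \<alpha> * (\<eta> z - 1)) \<le> 2 * (\<bar>\<alpha>\<bar> * (\<bar>B\<bar> + 1))"
      using abs_ge_minus_self[of "\<alpha> * (\<eta> z - 1)"] by (simp add: abs_mult)
    then show ?thesis by (simp add: Lam_def KL_def)
  qed
  have Dnn: "DD z \<ge> 0" for z by (simp add: DD_def)
  have "DD z \<ge> c0 / KL" if "z \<in> strip" for z
  proof -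
    have zc: "z \<in> cstrip" using that by (auto simp: strip_def cstrip_def)
    have "c0 \<le> Lam z * DD z" using W8[OF that] by (simp add: Lam_def gradsq_DD)
    also have "\<dots> \<le> KL * DD z" using LK[OF zc] Dnn by (intro mult_right_mono) auto
    finally show ?thesis using KLp by (simp add: divide_le_eq mult.commute)
  qed
  then have "\<forall>z\<in>cstrip. DD z \<ge> c0 / KL" using strip_ge_closure[OF cont(7)] by blast
  moreover have "c0 / KL > 0" using c0 KLp by simp
  ultimately show ?thesis by blast
qed

lemma DD_nz: "z \<in> cstrip \<Longrightarrow> DD z \<noteq> 0" using DD_low by force

lemma LamD: "z \<in> cstrip \<Longrightarrow> Lam z * DD z \<ge> c0"
proof -
  assume z: "z \<in> cstrip"
  have c: "continuous_on cstrip (\<lambda>z. Lam z * DD z)" unfolding Lam_def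
    by (intro continuous_intros cont)
  show ?thesis by (rule strip_ge_closure[OF c _ z]) (use W8 in \<open>simp add: Lam_def gradsq_DD\<close>)
qed

lemma uu_sm: "sm 2 uu" unfolding uu_def by (intro sm_div sm_add sm_mult sm2D DD_sm DD_nz)
lemma vv_sm: "sm 2 vv" unfolding vv_def by (intro sm_div sm_diff sm_mult sm2D DD_sm DD_nz)

end

lemma ring1:
  fixes Px Qy ux uy vx vy u v a b ax ay bx bw :: real
  shows "Px = ux * a + u * ax - (vx * b + v * bx) \<Longrightarrow> Qy = uy * b + u * bw + (vy * a + v * ay) \<Longrightarrow> ax = - bw \<Longrightarrow> ay = bx
    \<Longrightarrow> a*(ux+vy) + b*(uy - vx) = Px + Qy"
  by (simp add: algebra_simps)

lemma ring2:
  fixes Py Qx ux uy vx vy u v a b ax ay bx bw :: real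
  shows "Py = uy * a + u * ay - (vy * b + v * bw) \<Longrightarrow> Qx = ux * b + u * bx + (vx * a + v * ax) \<Longrightarrow> ax = - bw \<Longrightarrow> ay = bx
    \<Longrightarrow> Py = Qx \<Longrightarrow> a*(uy - vx) - b*(ux + vy) = 0"
  by (simp add: algebra_simps)

lemma pq_alg:
  fixes P Q a b D :: real
  assumes D: "D = a * a + b * b" "D \<noteq> 0"
  shows "P = (P * a + Q * b) / D * a - (Q * a - P * b) / D * b"
    "Q = (P * a + Q * b) / D * b + (Q * a - P * b) / D * a"
proof -
  have n1: "(P * a + Q * b) * a - (Q * a - P * b) * b = P * D" using D(1) by (simp add: algebra_simps)
  have "(P * a + Q * b) / D * a - (Q * a - P * b) / D * b = ((P * a + Q * b) * a - (Q * a - P * b) * b) / D"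
    using D(2) by (simp add: field_simps)
  also have "\<dots> = P" unfolding n1 using D(2) by simp
  finally show "P = (P * a + Q * b) / D * a - (Q * a - P * b) / D * b" by simp
  have n2: "(P * a + Q * b) * b + (Q * a - P * b) * a = Q * D" using D(1) by (simp add: algebra_simps)
  have "(P * a + Q * b) / D * b + (Q * a - P * b) / D * a = ((P * a + Q * b) * b + (Q * a - P * b) * a) / D"
    using D(2) by (simp add: field_simps)
  also have "\<dots> = Q" unfolding n2 using D(2) by simp
  finally show "Q = (P * a + Q * b) / D * b + (Q * a - P * b) / D * a" by simp
qed

context setting begin

lemma PQ: "z \<in> cstrip \<Longrightarrow> Dx \<psi> z = uu z * Dx \<eta> z - vv z * Dy \<eta> z"
  "z \<in> cstrip \<Longrightarrow> Dy \<psi> z = uu z * Dy \<eta> z + vv z * Dx \<eta> z"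
  using pq_alg[where P = "Dx \<psi> z" and Q = "Dy \<psi> z" and a = "Dx \<eta> z" and b = "Dy \<eta> z" and D = "DD z", OF DD_def[THEN fun_cong] DD_nz[of z]]
  by (simp_all add: uu_def vv_def)

lemma uv_has: "\<And>z. z \<in> cstrip \<Longrightarrow> has_Dx uu z" "\<And>z. z \<in> cstrip \<Longrightarrow> has_Dy uu z"
  "\<And>z. z \<in> cstrip \<Longrightarrow> has_Dx vv z" "\<And>z. z \<in> cstrip \<Longrightarrow> has_Dy vv z"
  "\<And>z. z \<in> cstrip \<Longrightarrow> has_Dx (Dx \<eta>) z" "\<And>z. z \<in> cstrip \<Longrightarrow> has_Dy (Dx \<eta>) z"
  "\<And>z. z \<in> cstrip \<Longrightarrow> has_Dx (Dy \<eta>) z" "\<And>z. z \<in> cstrip \<Longrightarrow> has_Dy (Dy \<eta>) z"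
  using sm2_parts(1)[OF uu_sm] sm2_parts(1)[OF vv_sm] sm2_parts(2,3)[OF sm2(2)] sm2_more[OF sm2(2)] by auto

lemma sc: "z \<in> strip \<Longrightarrow> z \<in> cstrip" by (auto simp: strip_def cstrip_def)

lemma Sys: assumes z: "z \<in> strip"
  shows "Dx uu z + Dy vv z = - g (\<psi> z) * Dx \<eta> z" "Dy uu z - Dx vv z = - g (\<psi> z) * Dy \<eta> z"
proof -
  obtain x y where zxy: "z = (x, y)" by fastforce
  have zs: "(x, y) \<in> strip" and zc: "(x, y) \<in> cstrip" using z sc by (auto simp: zxy)
  have lc: "(t, y) \<in> cstrip" for t using zc by (auto simp: cstrip_def)
  have Px: "Dx (Dx \<psi>) z = Dx uu z * Dx \<eta> z + uu z * Dx (Dx \<eta>) z - (Dx vv z * Dy \<eta> z + vv z * Dx (Dy \<eta>) z)"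
  proof -
    have "Dx (Dx \<psi>) (x, y) = Dx (\<lambda>w. uu w * Dx \<eta> w - vv w * Dy \<eta> w) (x, y)"
      using Dx_cong[of "Dx \<psi>" "(x, y)" "\<lambda>w. uu w * Dx \<eta> w - vv w * Dy \<eta> w"] PQ(1)[OF lc] by simp
    also have "\<dots> = Dx uu z * Dx \<eta> z + uu z * Dx (Dx \<eta>) z - (Dx vv z * Dy \<eta> z + vv z * Dx (Dy \<eta>) z)"
      unfolding zxy by (rule Dx_eqI') (auto intro!: derivative_eq_intros hx_at uv_has has zc)
    finally show ?thesis by (simp add: zxy)
  qed
  have Qx: "Dx (Dy \<psi>) z = Dx uu z * Dy \<eta> z + uu z * Dx (Dy \<eta>) z + (Dx vv z * Dx \<eta> z + vv z * Dx (Dx \<eta>) z)"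
  proof -
    have "Dx (Dy \<psi>) (x, y) = Dx (\<lambda>w. uu w * Dy \<eta> w + vv w * Dx \<eta> w) (x, y)"
      using Dx_cong[of "Dy \<psi>" "(x, y)" "\<lambda>w. uu w * Dy \<eta> w + vv w * Dx \<eta> w"] PQ(2)[OF lc] by simp
    also have "\<dots> = Dx uu z * Dy \<eta> z + uu z * Dx (Dy \<eta>) z + (Dx vv z * Dx \<eta> z + vv z * Dx (Dx \<eta>) z)"
      unfolding zxy by (rule Dx_eqI') (auto intro!: derivative_eq_intros hx_at uv_has has zc)
    finally show ?thesis by (simp add: zxy)
  qed
  have lc2: "t \<in> {0..1} \<Longrightarrow> (x, t) \<in> cstrip" for t by (auto simp: cstrip_def)
  have Py: "Dy (Dx \<psi>) z = Dy uu z * Dx \<eta> z + uu z * Dy (Dx \<eta>) z - (Dy vv z * Dy \<eta> z + vv z * Dy (Dy \<eta>) z)"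
  proof -
    have "Dy (Dx \<psi>) (x, y) = Dy (\<lambda>w. uu w * Dx \<eta> w - vv w * Dy \<eta> w) (x, y)"
      using Dy_cong[of "Dx \<psi>" "(x, y)" "\<lambda>w. uu w * Dx \<eta> w - vv w * Dy \<eta> w"] PQ(1)[OF lc2] zc
      by (auto simp: cstrip_def)
    also have "\<dots> = Dy uu z * Dx \<eta> z + uu z * Dy (Dx \<eta>) z - (Dy vv z * Dy \<eta> z + vv z * Dy (Dy \<eta>) z)"
      unfolding zxy by (rule Dy_eqI'[OF _ zs]) (auto intro!: derivative_eq_intros hy_at uv_has has zc zs)
    finally show ?thesis by (simp add: zxy)
  qed
  have Qy: "Dy (Dy \<psi>) z = Dy uu z * Dy \<eta> z + uu z * Dy (Dy \<eta>) z + (Dy vv z * Dx \<eta> z + vv z * Dy (Dx \<eta>) z)"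
  proof -
    have "Dy (Dy \<psi>) (x, y) = Dy (\<lambda>w. uu w * Dy \<eta> w + vv w * Dx \<eta> w) (x, y)"
      using Dy_cong[of "Dy \<psi>" "(x, y)" "\<lambda>w. uu w * Dy \<eta> w + vv w * Dx \<eta> w"] PQ(2)[OF lc2] zc
      by (auto simp: cstrip_def)
    also have "\<dots> = Dy uu z * Dy \<eta> z + uu z * Dy (Dy \<eta>) z + (Dy vv z * Dx \<eta> z + vv z * Dy (Dx \<eta>) z)"
      unfolding zxy by (rule Dy_eqI'[OF _ zs]) (auto intro!: derivative_eq_intros hy_at uv_has has zc zs)
    finally show ?thesis by (simp add: zxy)
  qed
  have E1: "Dy (Dx \<psi>) z = Dx (Dy \<psi>) z" by (rule schwarz[OF sm2(1) z])
  have E2: "Dy (Dx \<eta>) z = Dx (Dy \<eta>) z" by (rule schwarz[OF sm2(2) z])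
  have E3: "Dx (Dx \<eta>) z = - Dy (Dy \<eta>) z" using W4a[OF z] by (simp add: lap_def)
  have E4: "Dx (Dx \<psi>) z + Dy (Dy \<psi>) z = - g (\<psi> z) * (Dx \<eta> z ^ 2 + Dy \<eta> z ^ 2)"
    using W1[OF z] by (simp add: lap_def gradsq_def)
  have e1: "Dx \<eta> z * (Dx uu z + Dy vv z) + Dy \<eta> z * (Dy uu z - Dx vv z) = - g (\<psi> z) * (Dx \<eta> z ^ 2 + Dy \<eta> z ^ 2)"
    using ring1[OF Px Qy E3 E2] E4 by simp
  have e2: "Dx \<eta> z * (Dy uu z - Dx vv z) - Dy \<eta> z * (Dx uu z + Dy vv z) = 0"
    using ring2[OF Py Qx E3 E2 E1] .
  have nz: "Dx \<eta> z ^ 2 + Dy \<eta> z ^ 2 \<noteq> 0" using DD_nz[OF sc[OF z]] by (simp add: DD_def power2_eq_square)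
  from solve2[OF e1 e2 nz]
  show "Dx uu z + Dy vv z = - g (\<psi> z) * Dx \<eta> z" "Dy uu z - Dx vv z = - g (\<psi> z) * Dy \<eta> z" by simp_all
qed

end

context setting begin

lemma gder: "(g has_real_derivative deriv g s) (at s)"
  using gd DERIV_deriv_iff_real_differentiable by blast

lemma gcont: "continuous_on UNIV g" "continuous_on UNIV (deriv g)"
  using gd gd2 by (auto intro!: continuous_at_imp_continuous_on differentiable_imp_continuous_within)

lemma uv_has2: "\<And>z. z \<in> cstrip \<Longrightarrow> has_Dx (Dy uu) z" "\<And>z. z \<in> cstrip \<Longrightarrow> has_Dy (Dx uu) z"
  using sm2_parts(2,3)[OF uu_sm] by auto

lemma Lap: assumes z: "z \<in> strip"
  shows "Dx (Dx vv) z + Dy (Dy vv) z = - deriv g (\<psi> z) * DD z * vv z"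
proof -
  obtain x y where zxy: "z = (x, y)" by fastforce
  have zs: "(x, y) \<in> strip" and zc: "(x, y) \<in> cstrip" using z sc by (auto simp: zxy)
  have ls: "(t, y) \<in> strip" for t using zs by (auto simp: strip_def)
  have VX: "Dx vv w = Dy uu w + g (\<psi> w) * Dy \<eta> w" if "w \<in> strip" for w using Sys(2)[OF that] by simp
  have VY: "Dy vv w = - g (\<psi> w) * Dx \<eta> w - Dx uu w" if "w \<in> strip" for w using Sys(1)[OF that] by simp
  have gx: "((\<lambda>t. g (\<psi> (t, y))) has_real_derivative deriv g (\<psi> (x, y)) * Dx \<psi> (x, y)) (at x)"
    by (rule DERIV_chain2[OF gder hx_at[OF has(1)[OF zc]]])
  have gy: "((\<lambda>t. g (\<psi> (x, t))) has_real_derivative deriv g (\<psi> (x, y)) * Dy \<psi> (x, y)) (at y)"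
    by (rule DERIV_chain2[OF gder hy_at[OF has(2)[OF zc] zs]])
  have A: "Dx (Dx vv) z = Dx (Dy uu) z + deriv g (\<psi> z) * Dx \<psi> z * Dy \<eta> z + g (\<psi> z) * Dx (Dy \<eta>) z"
  proof -
    have "Dx (Dx vv) (x, y) = Dx (\<lambda>w. Dy uu w + g (\<psi> w) * Dy \<eta> w) (x, y)"
      using Dx_cong[of "Dx vv" "(x, y)" "\<lambda>w. Dy uu w + g (\<psi> w) * Dy \<eta> w"] VX[OF ls] by simp
    also have "\<dots> = Dx (Dy uu) z + deriv g (\<psi> z) * Dx \<psi> z * Dy \<eta> z + g (\<psi> z) * Dx (Dy \<eta>) z"
      unfolding zxy by (rule Dx_eqI') (auto intro!: derivative_eq_intros hx_at uv_has uv_has2 gx zc)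
    finally show ?thesis by (simp add: zxy)
  qed
  have B: "Dy (Dy vv) z = - (deriv g (\<psi> z) * Dy \<psi> z * Dx \<eta> z + g (\<psi> z) * Dy (Dx \<eta>) z) - Dy (Dx uu) z"
  proof -
    have "Dy (Dy vv) (x, y) = Dy (\<lambda>w. - g (\<psi> w) * Dx \<eta> w - Dx uu w) (x, y)"
      using Dy_cong_open[of "Dy vv" "(x, y)" "\<lambda>w. - g (\<psi> w) * Dx \<eta> w - Dx uu w"] VY zs
      by (auto simp: strip_def)
    also have "\<dots> = - (deriv g (\<psi> z) * Dy \<psi> z * Dx \<eta> z + g (\<psi> z) * Dy (Dx \<eta>) z) - Dy (Dx uu) z"
      unfolding zxy by (rule Dy_eqI'[OF _ zs]) (auto intro!: derivative_eq_intros hy_at uv_has uv_has2 gy zc zs)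
    finally show ?thesis by (simp add: zxy)
  qed
  have S1: "Dy (Dx uu) z = Dx (Dy uu) z" by (rule schwarz[OF uu_sm z])
  have S2: "Dy (Dx \<eta>) z = Dx (Dy \<eta>) z" by (rule schwarz[OF sm2(2) z])
  have vD: "vv z * DD z = Dy \<psi> z * Dx \<eta> z - Dx \<psi> z * Dy \<eta> z" using DD_nz[OF sc[OF z]] by (simp add: vv_def)
  have "Dx (Dx vv) z + Dy (Dy vv) z = deriv g (\<psi> z) * (Dx \<psi> z * Dy \<eta> z - Dy \<psi> z * Dx \<eta> z)"
    using A B S1 S2 by (simp add: algebra_simps)
  also have "\<dots> = - deriv g (\<psi> z) * (vv z * DD z)" unfolding vD by (simp add: algebra_simps)
  finally show ?thesis by (simp add: algebra_simps)
qed

definition "cc = (\<lambda>z. - deriv g (\<psi> z) * DD z)"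

lemma cc_cont: "continuous_on cstrip cc"
  unfolding cc_def
  by (intro continuous_intros cont continuous_on_compose2[OF gcont(2) cont(1)]) auto

lemma mp_vv: "mp vv cc"
proof
  show "sm 2 vv" by (rule vv_sm)
  show "Dx (Dx vv) z + Dy (Dy vv) z = cc z * vv z" if "z \<in> strip" for z
    using Lap[OF that] by (simp add: cc_def)
  show "0 \<le> cc z" if "z \<in> strip" for z
    using gnp[of "\<psi> z"] by (simp add: cc_def DD_def mult_nonpos_nonneg)
  show "continuous_on cstrip cc" by (rule cc_cont)
qed

end

lemma uv_id:
  fixes P Q a b D :: real
  assumes D: "D = a * a + b * b" "D \<noteq> 0"
  shows "((P * a + Q * b) / D)^2 + ((Q * a - P * b) / D)^2 = (P^2 + Q^2) / D"
proof -
  have "(P * a + Q * b)^2 + (Q * a - P * b)^2 = (P^2 + Q^2) * D" using D(1) by (simp add: power2_eq_square algebra_simps)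
  then show ?thesis using D(2) by (simp add: power_divide add_divide_distrib[symmetric] power2_eq_square)
qed

context setting begin

lemma P_bot: "Dx \<psi> (x, 0) = 0" "Dx \<eta> (x, 0) = 0" "Dx \<psi> (x, 1) = 0"
proof -
  have "(\<lambda>t. \<psi> (t, 0)) = (\<lambda>t. 0)" "(\<lambda>t. \<eta> (t, 0)) = (\<lambda>t. 0)" "(\<lambda>t. \<psi> (t, 1)) = (\<lambda>t. 1)"
    using W2a W2b W4b by auto
  then show "Dx \<psi> (x, 0) = 0" "Dx \<eta> (x, 0) = 0" "Dx \<psi> (x, 1) = 0"
    by (auto intro!: Dx_eqI' simp del: DERIV_const intro: DERIV_const)
qed

lemma vv_bot: "vv (x, 0) = 0" using P_bot by (simp add: vv_def)

lemma odd_Dx: assumes f: "f = \<psi> \<or> f = \<eta>" and y: "0 \<le> y" "y \<le> 1"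
  shows "Dx f (-x, y) = - Dx f (x, y)" "Dy f (-x, y) = Dy f (x, y)"
proof -
  have ev: "f (- t, s) = f (t, s)" if "0 \<le> s" "s \<le> 1" for t s using W7[OF that] f by auto
  have xc: "(x, y) \<in> cstrip" using y by (simp add: cstrip_def)
  have hx: "has_Dx f (x, y)" "has_Dy f (x, y)" using has[OF xc] f by auto
  have d1: "((\<lambda>t. f (t, y)) has_real_derivative Dx f (x, y)) (at x)" by (rule hx_at[OF hx(1)])
  have "((\<lambda>t. f (- t, y)) has_real_derivative Dx f (x, y) * (- 1)) (at (- x))"
    by (rule DERIV_chain2[of "\<lambda>t. f (t, y)"]) (use d1 in \<open>auto intro!: derivative_eq_intros\<close>)
  moreover have "(\<lambda>t. f (- t, y)) = (\<lambda>t. f (t, y))" using ev y by auto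
  ultimately have "((\<lambda>t. f (t, y)) has_real_derivative - Dx f (x, y)) (at (- x))" by simp
  then show "Dx f (-x, y) = - Dx f (x, y)" by (rule Dx_eqI')
  show "Dy f (-x, y) = Dy f (x, y)" unfolding Dy_def
    by (rule vector_derivative_cong_eq) (use ev y in \<open>auto intro!: always_eventually\<close>)
qed

lemma vv_odd: "0 \<le> y \<Longrightarrow> y \<le> 1 \<Longrightarrow> vv (-x, y) = - vv (x, y)"
  using odd_Dx[of \<psi> y x] odd_Dx[of \<eta> y x] by (simp add: vv_def DD_def algebra_simps minus_divide_left)

lemma vv_axis: "0 \<le> y \<Longrightarrow> y \<le> 1 \<Longrightarrow> vv (0, y) = 0"
  using vv_odd[of y 0] by simp

lemma vv_bdd: "\<exists>M. \<forall>z\<in>cstrip. vv z \<le> M"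
proof -
  obtain BP where BP: "\<And>z. z \<in> cstrip \<Longrightarrow> \<bar>Dx \<psi> z\<bar> \<le> BP" using hbound[OF H\<psi>, of "[True]"] by auto
  obtain BQ where BQ: "\<And>z. z \<in> cstrip \<Longrightarrow> \<bar>Dy \<psi> z\<bar> \<le> BQ" using hbound[OF H\<psi>, of "[False]"] by auto
  obtain Ba where Ba: "\<And>z. z \<in> cstrip \<Longrightarrow> \<bar>Dx \<eta> z\<bar> \<le> Ba" using hbound[OF H\<eta>, of "[True]"] by auto
  obtain Bb where Bb: "\<And>z. z \<in> cstrip \<Longrightarrow> \<bar>Dy \<eta> z\<bar> \<le> Bb" using hbound[OF H\<eta>, of "[False]"] by auto
  obtain \<delta> where d: "\<delta> > 0" "\<And>z. z \<in> cstrip \<Longrightarrow> DD z \<ge> \<delta>" using DD_low by auto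
  have "vv z \<le> (BQ * Ba + BP * Bb) / \<delta>" if z: "z \<in> cstrip" for z
  proof -
    have "\<bar>Dy \<psi> z * Dx \<eta> z - Dx \<psi> z * Dy \<eta> z\<bar> \<le> \<bar>Dy \<psi> z\<bar> * \<bar>Dx \<eta> z\<bar> + \<bar>Dx \<psi> z\<bar> * \<bar>Dy \<eta> z\<bar>"
      by (simp add: abs_mult[symmetric] abs_triangle_ineq4)
    also have "\<dots> \<le> BQ * Ba + BP * Bb"
      using BP[OF z] BQ[OF z] Ba[OF z] Bb[OF z] by (intro add_mono mult_mono) auto
    finally have num: "\<bar>Dy \<psi> z * Dx \<eta> z - Dx \<psi> z * Dy \<eta> z\<bar> \<le> BQ * Ba + BP * Bb" .
    have "vv z \<le> \<bar>vv z\<bar>" by simp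
    also have "\<dots> = \<bar>Dy \<psi> z * Dx \<eta> z - Dx \<psi> z * Dy \<eta> z\<bar> / DD z"
      using d(2)[OF z] d(1) by (simp add: vv_def abs_divide)
    also have "\<dots> \<le> (BQ * Ba + BP * Bb) / DD z" using num d(2)[OF z] d(1) by (intro divide_right_mono) auto
    also have "\<dots> \<le> (BQ * Ba + BP * Bb) / \<delta>"
      using d(2)[OF z] d(1) num by (intro divide_left_mono) (auto intro: order_trans[OF abs_ge_zero])
    finally show ?thesis .
  qed
  then show ?thesis by blast
qed

end

context setting begin

lemma gamma_Dy: assumes v0: "vv (x0, 1) = 0" shows "Dy vv (x0, 1) = 0"
proof -
  define z0 where "z0 = (x0, (1::real))"
  have zc: "z0 \<in> cstrip" by (simp add: z0_def cstrip_def)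
  have P0: "Dx \<psi> z0 = 0" using P_bot(3) by (simp add: z0_def)
  have Q2: "(Dy \<psi> z0)^2 = Lam z0 * DD z0" using W3[of x0] by (simp add: z0_def Lam_def gradsq_DD)
  then have "(Dy \<psi> z0)^2 \<ge> c0" using LamD[OF zc] by simp
  then have Qnz: "Dy \<psi> z0 \<noteq> 0" using c0 by auto
  have Dnz: "DD z0 \<noteq> 0" by (rule DD_nz[OF zc])
  have "Dy \<psi> z0 * Dx \<eta> z0 / DD z0 = 0" using v0 P0 by (simp add: vv_def z0_def)
  then have a0: "Dx \<eta> z0 = 0" using Qnz Dnz by simp
  have s1: "sm 1 (Dy vv)" "sm 1 (Dx uu)" using sm_Suc_D[of 1 vv] sm_Suc_D[of 1 uu] vv_sm uu_sm
    by (simp_all add: numeral_2_eq_2)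
  have Fc: "continuous_on cstrip (\<lambda>z. Dy vv z + g (\<psi> z) * Dx \<eta> z + Dx uu z)"
    by (intro continuous_intros sm_cont[OF s1(1)] sm_cont[OF s1(2)] cont continuous_on_compose2[OF gcont(1) cont(1)]) auto
  have "Dy vv z0 + g (\<psi> z0) * Dx \<eta> z0 + Dx uu z0 = 0"
  proof (rule strip_eq_closure[OF Fc _ zc])
    fix z assume "z \<in> strip"
    from Sys(1)[OF this] show "Dy vv z + g (\<psi> z) * Dx \<eta> z + Dx uu z = 0" by simp
  qed
  then have Dyv: "Dy vv z0 = - Dx uu z0" using a0 by simp
  \<comment> \<open>Bernoulli along the top\<close>
  have ID: "uu (t, 1)^2 + vv (t, 1)^2 = Lam (t, 1)" for t
  proof -
    have tc: "(t, 1) \<in> cstrip" by (simp add: cstrip_def)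
    have "uu (t, 1)^2 + vv (t, 1)^2 = ((Dx \<psi> (t,1))^2 + (Dy \<psi> (t,1))^2) / DD (t, 1)"
      unfolding uu_def vv_def by (rule uv_id[OF DD_def[THEN fun_cong] DD_nz[OF tc]])
    also have "\<dots> = Lam (t, 1)" using W3[of t] P_bot(3)[of t] DD_nz[OF tc] by (simp add: Lam_def gradsq_DD)
    finally show ?thesis .
  qed
  have c1: "(x0, 1) \<in> cstrip" by (simp add: cstrip_def)
  have d1: "((\<lambda>t. uu (t, 1)^2 + vv (t, 1)^2) has_real_derivative
      2 * uu z0 * Dx uu z0 + 2 * vv z0 * Dx vv z0) (at x0)"
    unfolding z0_def by (auto intro!: derivative_eq_intros hx_at uv_has c1)
  have d2: "((\<lambda>t. Lam (t, 1)) has_real_derivative - 2 * \<alpha> * Dx \<eta> z0) (at x0)"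
    unfolding z0_def Lam_def by (auto intro!: derivative_eq_intros hx_at has c1)
  have "(\<lambda>t. uu (t, 1)^2 + vv (t, 1)^2) = (\<lambda>t. Lam (t, 1))" using ID by auto
  then have "2 * uu z0 * Dx uu z0 + 2 * vv z0 * Dx vv z0 = - 2 * \<alpha> * Dx \<eta> z0"
    using DERIV_unique[OF d1] d2 by simp
  then have uux: "uu z0 * Dx uu z0 = 0" using a0 v0 by (simp add: z0_def)
  have "DD z0 = (Dy \<eta> z0)^2" using a0 by (simp add: DD_def power2_eq_square)
  then have bnz: "Dy \<eta> z0 \<noteq> 0" using Dnz by auto
  have "uu z0 = Dy \<psi> z0 * Dy \<eta> z0 / DD z0" using a0 by (simp add: uu_def)
  then have "uu z0 \<noteq> 0" using Qnz bnz Dnz by simp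
  then have "Dx uu z0 = 0" using uux by simp
  then show ?thesis using Dyv by (simp add: z0_def)
qed

end

theorem mainTheorem8:
  fixes g pt dpt :: "real \<Rightarrow> real" and \<beta> \<alpha> :: real
    and \<psi> \<eta> :: "real \<times> real \<Rightarrow> real"
  assumes beta: "0 < \<beta>" "\<beta> < 1"
    and gamma_reg: "C21_loc g"
    and triv: "triv_profile g pt dpt"
    and gamma_nonincr: "\<forall>s. deriv g s \<le> 0"
    and sol: "solves_W g \<beta> pt ((dpt 1)\<^sup>2) \<alpha> \<psi> \<eta>"
    and v_top: "\<forall>p\<in>Gamma_plus. vvel \<psi> \<eta> p \<le> 0"
  shows "(\<forall>p\<in>Gamma_plus \<union> R_plus. vvel \<psi> \<eta> p < 0) \<or> (\<forall>p\<in>cstrip. vvel \<psi> \<eta> p = 0)"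
proof -
  note S = sol[unfolded solves_W_def]
  obtain c0 where c0: "c0 > 0" "\<forall>p\<in>strip. ((dpt 1)\<^sup>2 - 2 * \<alpha> * (\<eta> p - 1)) * gradsq \<eta> p \<ge> c0"
    using S by blast
  interpret st: setting g "(dpt 1)\<^sup>2" \<alpha> \<beta> c0 \<psi> \<eta>
  proof
    show "\<And>x. g differentiable at x" "\<And>x. deriv g differentiable at x"
      using gamma_reg unfolding C21_loc_def by blast+
    show "\<And>s. deriv g s \<le> 0" using gamma_nonincr by blast
  qed (use S c0 in blast)+
  interpret mp: mp st.vv st.cc by (rule st.mp_vv)
  have vv_eq: "vvel \<psi> \<eta> p = st.vv p" for p by (rule st.vvel_vv)
  obtain M where M: "\<And>z. z \<in> cstrip \<Longrightarrow> st.vv z \<le> M" using st.vv_bdd by blast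
  have Qle: "st.vv (x, y) \<le> 0" if "x \<ge> 0" "0 \<le> y" "y \<le> 1" for x y
  proof (rule mp.weak_max[OF _ _ _ M that])
    show "st.vv (0, y) \<le> 0" if "0 \<le> y" "y \<le> 1" for y using st.vv_axis[OF that] by simp
    show "st.vv (x, 0) \<le> 0" for x using st.vv_bot by simp
    show "st.vv (x, 1) \<le> 0" if "x \<ge> 0" for x
    proof (cases "x = 0")
      case True then show ?thesis using st.vv_axis[of 1] by simp
    next
      case False
      then have "(x, 1) \<in> Gamma_plus" using that by (simp add: Gamma_plus_def)
      then show ?thesis using v_top vv_eq by auto
    qed
  qed auto
  from mp.strong_max[OF Qle]
  show ?thesis
  proof
    assume neg: "\<forall>z\<in>R_plus. st.vv z < 0"
    have "vvel \<psi> \<eta> p < 0" if p: "p \<in> Gamma_plus \<union> R_plus" for p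
    proof (cases "p \<in> R_plus")
      case True then show ?thesis using neg vv_eq by simp
    next
      case False
      then have pG: "p \<in> Gamma_plus" using p by simp
      obtain x0 where p1: "p = (x0, 1)" and x0: "x0 > 0" using pG by (cases p) (auto simp: Gamma_plus_def)
      have le: "st.vv (x0, 1) \<le> 0" using v_top pG vv_eq p1 by auto
      have "st.vv (x0, 1) \<noteq> 0"
      proof
        assume v0: "st.vv (x0, 1) = 0"
        show False by (rule mp.hopf_top[OF Qle _ x0 v0 st.gamma_Dy[OF v0]]) (use neg in auto)
      qed
      then show ?thesis using le vv_eq p1 by simp
    qed
    then show ?thesis by blast
  next
    assume zero: "\<forall>z\<in>R_plus. st.vv z = 0"
    have zs: "st.vv z = 0" if z: "z \<in> strip" for z
    proof -
      obtain x y where zxy: "z = (x, y)" by fastforce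
      have y: "0 < y" "y < 1" using z by (auto simp: zxy strip_def)
      consider "x > 0" | "x = 0" | "x < 0" by linarith
      then show ?thesis
      proof cases
        case 1 then show ?thesis using zero y by (auto simp: zxy R_plus_def)
      next
        case 2 then show ?thesis using st.vv_axis[of y] y by (simp add: zxy)
      next
        case 3
        then have "st.vv (-x, y) = 0" using zero y by (auto simp: R_plus_def)
        then show ?thesis using st.vv_odd[of y "-x"] y by (simp add: zxy)
      qed
    qed
    have "st.vv p = 0" if "p \<in> cstrip" for p
      by (rule strip_eq_closure[OF sm_cont[OF st.vv_sm] zs that])
    then show ?thesis using vv_eq by simp
  qed
qed

end
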